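(* Let $\Bbbk$ be a field of characteristic zero and $h_L,h_M,c_L,c_M\in\Bbbk$. As modules over the boundary Carrollian conformal algebra $\widehat{\mathfrak b}$, $$V(h_L,h_M,c_L,c_M)\cong \frac{U(\widehat{\mathfrak b})}{U(\widehat{\mathfrak b})\cdot(P_0-2h_M,\ C_M-c_M)},$$ where the denominator is the left ideal generated by $P_0-2h_M$ and $C_M-c_M$.
   Context: The BMS$_3$ algebra $\mathfrak{bms}$ over $\Bbbk$ has basis $\{L_n,M_n\mid n\in\mathbb{Z}\}\cup\{C_L,C_M\}$, with $C_L,C_M$ central and $[L_n,L_m]=(n-m)L_{n+m}+\frac1{12}n(n^2-1)\delta_{m,-n}C_L$, $[L_n,M_m]=(n-m)M_{n+m}+\frac1{12}n(n^2-1)\delta_{m,-n}C_M$, $[M_n,M_m]=0$. The BCCA $\widehat{\mathfrak b}$ is the subalgebra of $\mathfrak{bms}$ with basis $\{\mathcal O_n=L_n-L_{-n}\ (n\geq1),\ P_m=M_m+M_{-m}\ (m\geq 0),\ C_M\}$. The Verma module $V(h_L,h_M,c_L,c_M)$ is induced from the one-dimensional module $\Bbbk|h_L,h_M,c_L,c_M\rangle$ of $\mathrm{span}\{L_n,M_n\mid n\ge 0\}\oplus\Bbbk C_L\oplus\Bbbk C_M$ on which $L_0,M_0,C_L,C_M$ act by $h_L,h_M,c_L,c_M$ respectively and $L_n,M_n$ ($n>0$) act by $0$; it is regarded as a $\widehat{\mathfrak b}$-module by restriction. *)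

theory Defs
  imports Main
begin

text \<open>An element of the tensor (free associative) algebra T(g) over the field 'k,
  where g has basis indexed by the type 'b, is a finitely supported function
  from words over 'b to 'k.  All operations are defined on arbitrary functions;
  the relevant elements are those with finite support.\<close>

type_synonym ('b, 'k) tens = "'b list \<Rightarrow> 'k"

definition finsupp :: "('b, 'k::zero) tens \<Rightarrow> bool" where
  "finsupp f \<longleftrightarrow> finite {w. f w \<noteq> 0}"

definition tzero :: "('b, 'k::zero) tens" where
  "tzero = (\<lambda>w. 0)"

definition tadd :: "('b, 'k::plus) tens \<Rightarrow> ('b, 'k) tens \<Rightarrow> ('b, 'k) tens" where
  "tadd f g = (\<lambda>w. f w + g w)"

definition tsub :: "('b, 'k::minus) tens \<Rightarrow> ('b, 'k) tens \<Rightarrow> ('b, 'k) tens" where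
  "tsub f g = (\<lambda>w. f w - g w)"

definition tsmult :: "'k::times \<Rightarrow> ('b, 'k) tens \<Rightarrow> ('b, 'k) tens" where
  "tsmult c f = (\<lambda>w. c * f w)"

definition tmul :: "('b, 'k::comm_semiring_1) tens \<Rightarrow> ('b, 'k) tens \<Rightarrow> ('b, 'k) tens" where
  "tmul f g = (\<lambda>w. \<Sum>i\<le>length w. f (take i w) * g (drop i w))"

definition word :: "'b list \<Rightarrow> ('b, 'k::zero_neq_one) tens" where
  "word u = (\<lambda>w. if w = u then 1 else 0)"

definition tone :: "('b, 'k::zero_neq_one) tens" where
  "tone = word []"

definition gen :: "'b \<Rightarrow> ('b, 'k::zero_neq_one) tens" where
  "gen b = word [b]"

definition deg1 :: "('b, 'k::zero) tens \<Rightarrow> bool" where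
  "deg1 f \<longleftrightarrow> finsupp f \<and> (\<forall>w. length w \<noteq> 1 \<longrightarrow> f w = 0)"

inductive_set ideal_gen :: "('b, 'k::comm_ring_1) tens set \<Rightarrow> ('b, 'k) tens set"
  for S where
  zero: "tzero \<in> ideal_gen S"
| base: "s \<in> S \<Longrightarrow> s \<in> ideal_gen S"
| add: "x \<in> ideal_gen S \<Longrightarrow> y \<in> ideal_gen S \<Longrightarrow> tadd x y \<in> ideal_gen S"
| smult: "x \<in> ideal_gen S \<Longrightarrow> tsmult c x \<in> ideal_gen S"
| lmult: "x \<in> ideal_gen S \<Longrightarrow> finsupp a \<Longrightarrow> tmul a x \<in> ideal_gen S"
| rmult: "x \<in> ideal_gen S \<Longrightarrow> finsupp a \<Longrightarrow> tmul x a \<in> ideal_gen S"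

inductive_set lideal_gen :: "('b, 'k::comm_ring_1) tens set \<Rightarrow> ('b, 'k) tens set"
  for S where
  zero: "tzero \<in> lideal_gen S"
| base: "s \<in> S \<Longrightarrow> s \<in> lideal_gen S"
| add: "x \<in> lideal_gen S \<Longrightarrow> y \<in> lideal_gen S \<Longrightarrow> tadd x y \<in> lideal_gen S"
| smult: "x \<in> lideal_gen S \<Longrightarrow> tsmult c x \<in> lideal_gen S"
| lmult: "x \<in> lideal_gen S \<Longrightarrow> finsupp a \<Longrightarrow> tmul a x \<in> lideal_gen S"

fun wordprod :: "('b \<Rightarrow> ('c, 'k::comm_ring_1) tens) \<Rightarrow> 'b list \<Rightarrow> ('c, 'k) tens" where
  "wordprod \<phi> [] = tone"
| "wordprod \<phi> (b # w) = tmul (\<phi> b) (wordprod \<phi> w)"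

definition tens_hom :: "('b \<Rightarrow> ('c, 'k::comm_ring_1) tens) \<Rightarrow> ('b, 'k) tens \<Rightarrow> ('c, 'k) tens" where
  "tens_hom \<phi> f = (\<lambda>u. \<Sum>w\<in>{w. f w \<noteq> 0}. f w * wordprod \<phi> w u)"

definition br_lin :: "('b \<Rightarrow> 'b \<Rightarrow> ('b, 'k::comm_ring_1) tens)
    \<Rightarrow> ('b, 'k) tens \<Rightarrow> ('b, 'k) tens \<Rightarrow> ('b, 'k) tens" where
  "br_lin br x y = (\<lambda>u. \<Sum>c\<in>{c. x [c] \<noteq> 0}. \<Sum>d\<in>{d. y [d] \<noteq> 0}. x [c] * y [d] * br c d u)"

datatype bms = L int | M int | CL | CM

definition bms_br :: "bms \<Rightarrow> bms \<Rightarrow> (bms, 'k::field_char_0) tens" where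
  "bms_br a b = (case (a, b) of
      (L n, L m) \<Rightarrow> tadd (tsmult (of_int (n - m)) (gen (L (n + m))))
                        (if m = - n then tsmult (of_int (n * (n^2 - 1)) / 12) (gen CL) else tzero)
    | (L n, M m) \<Rightarrow> tadd (tsmult (of_int (n - m)) (gen (M (n + m))))
                        (if m = - n then tsmult (of_int (n * (n^2 - 1)) / 12) (gen CM) else tzero)
    | (M n, L m) \<Rightarrow> tsmult (-1) (tadd (tsmult (of_int (m - n)) (gen (M (m + n))))
                        (if n = - m then tsmult (of_int (m * (m^2 - 1)) / 12) (gen CM) else tzero))
    | _ \<Rightarrow> tzero)"

definition bms_rel :: "(bms, 'k::field_char_0) tens set" where
  "bms_rel = {tsub (tsub (tmul (gen a) (gen b)) (tmul (gen b) (gen a))) (bms_br a b) | a b. True}"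

text \<open>The Verma module V(h_L,h_M,c_L,c_M) = U(bms) \<otimes>_{U(bms_+)} k, presented as
  T(bms) modulo the left ideal generated by the UEA relations and
  x - \<lambda>(x) for x in the basis of bms_+ = span{L_n, M_n | n \<ge> 0} + k C_L + k C_M.\<close>
definition verma_ideal :: "'k::field_char_0 \<Rightarrow> 'k \<Rightarrow> 'k \<Rightarrow> 'k \<Rightarrow> (bms, 'k) tens set" where
  "verma_ideal hL hM cL cM = lideal_gen (ideal_gen bms_rel \<union>
      ({gen (L n) | n. n > 0} \<union> {gen (M n) | n. n > 0} \<union>
       {tsub (gen (L 0)) (tsmult hL tone), tsub (gen (M 0)) (tsmult hM tone),
        tsub (gen CL) (tsmult cL tone), tsub (gen CM) (tsmult cM tone)}))"

text \<open>Basis of bhat: Ob k stands for O_{k+1} = L_{k+1} - L_{-(k+1)} (k \<ge> 0, i.e. n = k+1 \<ge> 1),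
  Pb m stands for P_m = M_m + M_{-m} (m \<ge> 0), and CMb stands for C_M.\<close>
datatype bhat = Ob nat | Pb nat | CMb

definition bhat_emb :: "bhat \<Rightarrow> (bms, 'k::field_char_0) tens" where
  "bhat_emb x = (case x of
      Ob k \<Rightarrow> tsub (gen (L (int k + 1))) (gen (L (- (int k + 1))))
    | Pb m \<Rightarrow> tadd (gen (M (int m))) (gen (M (- int m)))
    | CMb \<Rightarrow> gen CM)"

text \<open>Defining relations of U(bhat) inside T(bhat): the bracket of bhat is the
  restriction of the bracket of bms, i.e. [a,b] is the (unique) degree-one
  element beta of T(bhat) whose image in bms is [emb a, emb b].\<close>
definition bhat_rel :: "(bhat, 'k::field_char_0) tens set" where
  "bhat_rel = {tsub (tsub (tmul (gen a) (gen b)) (tmul (gen b) (gen a))) \<beta> | a b \<beta>.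
       deg1 \<beta> \<and> tens_hom bhat_emb \<beta> = br_lin bms_br (bhat_emb a) (bhat_emb b)}"

text \<open>U(bhat)/U(bhat)(P_0 - 2h_M, C_M - c_M), presented as T(bhat) modulo a left ideal.\<close>
definition quot_ideal :: "'k::field_char_0 \<Rightarrow> 'k \<Rightarrow> (bhat, 'k) tens set" where
  "quot_ideal hM cM = lideal_gen (ideal_gen bhat_rel \<union>
      {tsub (gen (Pb 0)) (tsmult (2 * hM) tone), tsub (gen CMb) (tsmult cM tone)})"

text \<open>Isomorphism of bhat-modules T(bhat)/K1 \<cong> T(bms)/K2, where bhat acts on the
  first by left multiplication with generators and on the second by left
  multiplication with their images in bms.  A map phi on representatives
  induces a well-defined linear bijection of the quotients that commutes with
  the action of every basis element of bhat (hence of U(bhat)).\<close>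
definition bhat_mod_iso :: "(bhat, 'k::field_char_0) tens set \<Rightarrow> (bms, 'k) tens set \<Rightarrow> bool" where
  "bhat_mod_iso K1 K2 \<longleftrightarrow> (\<exists>\<phi> :: (bhat, 'k) tens \<Rightarrow> (bms, 'k) tens.
     (\<forall>x. finsupp x \<longrightarrow> finsupp (\<phi> x)) \<and>
     (\<forall>x y. finsupp x \<longrightarrow> finsupp y \<longrightarrow> tsub x y \<in> K1 \<longrightarrow> tsub (\<phi> x) (\<phi> y) \<in> K2) \<and>
     (\<forall>x y. finsupp x \<longrightarrow> finsupp y \<longrightarrow>
        tsub (\<phi> (tadd x y)) (tadd (\<phi> x) (\<phi> y)) \<in> K2) \<and>
     (\<forall>c x. finsupp x \<longrightarrow> tsub (\<phi> (tsmult c x)) (tsmult c (\<phi> x)) \<in> K2) \<and>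
     (\<forall>a x. finsupp x \<longrightarrow> tsub (\<phi> (tmul (gen a) x)) (tmul (bhat_emb a) (\<phi> x)) \<in> K2) \<and>
     (\<forall>x y. finsupp x \<longrightarrow> finsupp y \<longrightarrow> tsub (\<phi> x) (\<phi> y) \<in> K2 \<longrightarrow> tsub x y \<in> K1) \<and>
     (\<forall>y. finsupp y \<longrightarrow> (\<exists>x. finsupp x \<and> tsub y (\<phi> x) \<in> K2)))"

end

theory Submission
  imports Defs
begin


section \<open>Basic tensor facts\<close>

definition supp :: "('b, 'k::zero) tens \<Rightarrow> 'b list set" where
  "supp f = {w. f w \<noteq> 0}"

lemma finsupp_iff: "finsupp f \<longleftrightarrow> finite (supp f)"
  by (simp add: finsupp_def supp_def)

lemma finsupp_tzero[simp]: "finsupp tzero"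
  by (simp add: finsupp_def tzero_def)

lemma finsupp_tadd[simp]: "finsupp f \<Longrightarrow> finsupp g \<Longrightarrow> finsupp (tadd f (g::('b,'k::monoid_add) tens))"
  unfolding finsupp_def tadd_def
  by (rule finite_subset[of _ "{w. f w \<noteq> 0} \<union> {w. g w \<noteq> 0}"]) auto

lemma finsupp_tsub[simp]: "finsupp f \<Longrightarrow> finsupp g \<Longrightarrow> finsupp (tsub f (g::('b,'k::group_add) tens))"
  unfolding finsupp_def tsub_def
  by (rule finite_subset[of _ "{w. f w \<noteq> 0} \<union> {w. g w \<noteq> 0}"]) auto

lemma finsupp_tsmult[simp]: "finsupp f \<Longrightarrow> finsupp (tsmult c (f::('b,'k::mult_zero) tens))"
  unfolding finsupp_def tsmult_def
  by (rule finite_subset[of _ "{w. f w \<noteq> 0}"]) auto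

lemma finsupp_word[simp]: "finsupp (word u)"
  unfolding finsupp_def word_def
  by (rule finite_subset[of _ "{u}"]) auto

lemma finsupp_tone[simp]: "finsupp tone"
  by (simp add: tone_def)

lemma finsupp_gen[simp]: "finsupp (gen b)"
  by (simp add: gen_def)

lemma finsupp_tmul[simp]:
  assumes "finsupp f" "finsupp g"
  shows "finsupp (tmul f g)"
proof -
  have "{w. tmul f g w \<noteq> 0} \<subseteq> (\<lambda>(a,b). a @ b) ` ({w. f w \<noteq> 0} \<times> {w. g w \<noteq> 0})"
  proof
    fix w assume "w \<in> {w. tmul f g w \<noteq> 0}"
    then have "(\<Sum>i\<le>length w. f (take i w) * g (drop i w)) \<noteq> 0" by (simp add: tmul_def)
    then obtain i where "f (take i w) * g (drop i w) \<noteq> 0" using sum.not_neutral_contains_not_neutral by blast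
    then have "f (take i w) \<noteq> 0" "g (drop i w) \<noteq> 0" by auto
    then show "w \<in> (\<lambda>(a,b). a @ b) ` ({w. f w \<noteq> 0} \<times> {w. g w \<noteq> 0})"
      by (intro image_eqI[of _ _ "(take i w, drop i w)"]) auto
  qed
  then show ?thesis using assms unfolding finsupp_def
    by (meson finite_SigmaI finite_imageI finite_subset)
qed

definition tsum :: "('a \<Rightarrow> ('b, 'k::comm_monoid_add) tens) \<Rightarrow> 'a set \<Rightarrow> ('b, 'k) tens" where
  "tsum g A = (\<lambda>u. \<Sum>a\<in>A. g a u)"

lemma finsupp_tsum[simp]:
  assumes "finite A" "\<And>a. a \<in> A \<Longrightarrow> finsupp (g a)"
  shows "finsupp (tsum g A)"
  using assms
proof (induction A rule: finite_induct)
  case empty then show ?case by (simp add: tsum_def finsupp_def)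
next
  case (insert x F)
  have "tsum g (insert x F) = tadd (g x) (tsum g F)"
    using insert by (auto simp: tsum_def tadd_def)
  then show ?case using insert by simp
qed

lemma tadd_comm: "tadd f g = tadd g (f::('b,'k::ab_semigroup_add) tens)"
  by (auto simp: tadd_def add.commute)

lemma tadd_assoc: "tadd (tadd f g) h = tadd f (tadd g (h::('b,'k::semigroup_add) tens))"
  by (auto simp: tadd_def add.assoc)

lemma tadd_tzero[simp]: "tadd f tzero = (f::('b,'k::monoid_add) tens)" "tadd tzero f = f"
  by (auto simp: tadd_def tzero_def)

lemma tsmult_tzero[simp]: "tsmult c tzero = (tzero::('b,'k::mult_zero) tens)"
  by (auto simp: tsmult_def tzero_def)

lemma tsmult_0[simp]: "tsmult 0 f = (tzero::('b,'k::mult_zero) tens)"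
  by (auto simp: tsmult_def tzero_def)

lemma tsmult_1[simp]: "tsmult 1 f = (f::('b,'k::monoid_mult) tens)"
  by (auto simp: tsmult_def)

lemma tsub_self[simp]: "tsub f f = (tzero::('b,'k::ab_group_add) tens)"
  by (auto simp: tsub_def tzero_def)

lemma tsub_as_add: "tsub f g = tadd f (tsmult (-1) (g::('b,'k::ring_1) tens))"
  by (auto simp: tsub_def tadd_def tsmult_def)

lemma tsmult_tsmult[simp]: "tsmult a (tsmult b f) = tsmult (a*b) (f::('b,'k::semigroup_mult) tens)"
  by (auto simp: tsmult_def mult.assoc)

lemma tsmult_tadd: "tsmult a (tadd f g) = tadd (tsmult a f) (tsmult a (g::('b,'k::semiring) tens))"
  by (auto simp: tsmult_def tadd_def distrib_left)

lemma tsmult_tsub: "tsmult a (tsub f g) = tsub (tsmult a f) (tsmult a (g::('b,'k::ring) tens))"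
  by (auto simp: tsmult_def tsub_def right_diff_distrib)

lemma tmul_tadd_left: "tmul (tadd f g) h = tadd (tmul f h) (tmul g h)"
  by (auto simp: tmul_def tadd_def distrib_right sum.distrib)

lemma tmul_tadd_right: "tmul h (tadd f g) = tadd (tmul h f) (tmul h g)"
  by (auto simp: tmul_def tadd_def distrib_left sum.distrib)

lemma tmul_tsub_left: "tmul (tsub f g) h = tsub (tmul f h) (tmul (g::('b,'k::comm_ring_1) tens) h)"
  by (auto simp: tmul_def tsub_def left_diff_distrib sum_subtractf)

lemma tmul_tsub_right: "tmul h (tsub f g) = tsub (tmul h f) (tmul h (g::('b,'k::comm_ring_1) tens))"
  by (auto simp: tmul_def tsub_def right_diff_distrib sum_subtractf)

lemma tmul_tsmult_left: "tmul (tsmult c f) h = tsmult c (tmul f h)"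
  by (auto simp: tmul_def tsmult_def sum_distrib_left mult.assoc)

lemma tmul_tsmult_right: "tmul h (tsmult c f) = tsmult c (tmul h f)"
  by (auto simp: tmul_def tsmult_def sum_distrib_left mult.left_commute)

lemma tmul_tzero_left[simp]: "tmul tzero h = tzero"
  by (auto simp: tmul_def tzero_def)

lemma tmul_tzero_right[simp]: "tmul h tzero = tzero"
  by (auto simp: tmul_def tzero_def)

lemma tmul_word_word_pt: "tmul (word u) (word v) w = (word (u @ v) w :: 'k::comm_ring_1)"
proof -
  have "tmul (word u) (word v) w = (\<Sum>i\<le>length w. if i = length u \<and> w = u @ v then 1 else (0::'k))"
    unfolding tmul_def word_def
  proof (rule sum.cong[OF refl])
    fix i assume "i \<in> {..length w}"
    then have i: "i \<le> length w" by simp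
    show "(if take i w = u then 1 else 0) * (if drop i w = v then 1 else 0) =
          (if i = length u \<and> w = u @ v then 1 else (0::'k))"
    proof (cases "take i w = u \<and> drop i w = v")
      case True
      then have "w = u @ v" by (metis append_take_drop_id)
      moreover have "i = length u" using True i by auto
      ultimately show ?thesis using True by simp
    next
      case False
      then show ?thesis by auto
    qed
  qed
  also have "\<dots> = word (u @ v) w"
    by (auto simp: word_def sum.delta)
  finally show ?thesis .
qed

lemma tmul_word_word: "tmul (word u) (word v) = (word (u @ v) :: ('b,'k::comm_ring_1) tens)"
  using tmul_word_word_pt by blast

lemma finsupp_induct[consumes 1, case_names zero add smult word]:
  assumes f: "finsupp (f::('b,'k::comm_ring_1) tens)"
    and z: "P tzero"
    and a: "\<And>x y. finsupp x \<Longrightarrow> finsupp y \<Longrightarrow> P x \<Longrightarrow> P y \<Longrightarrow> P (tadd x y)"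
    and s: "\<And>c x. finsupp x \<Longrightarrow> P x \<Longrightarrow> P (tsmult c x)"
    and w: "\<And>u. P (word u)"
  shows "P f"
proof -
  have "\<forall>f. supp f = S \<longrightarrow> P f" if "finite S" for S
    using that
  proof (induction S rule: finite_induct)
    case empty
    show ?case
    proof (intro allI impI)
      fix f :: "('b,'k) tens" assume "supp f = {}"
      then have "f = tzero" by (auto simp: supp_def tzero_def)
      then show "P f" using z by simp
    qed
  next
    case (insert x F)
    show ?case
    proof (intro allI impI)
      fix f :: "('b,'k) tens" assume sf: "supp f = insert x F"
      let ?g = "f(x := 0)"
      have sg: "supp ?g = F" using insert sf by (auto simp: supp_def)
      have "P ?g" using insert.IH sg by blast
      have fg: "finsupp ?g" using sg insert by (simp add: finsupp_iff)
      have eq: "f = tadd (tsmult (f x) (word x)) ?g"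
        by (auto simp: tadd_def tsmult_def word_def)
      have "P (tadd (tsmult (f x) (word x)) ?g)"
        by (rule a[OF _ fg s[OF _ w] \<open>P ?g\<close>]) simp_all
      then show "P f" using eq by simp
    qed
  qed
  then show ?thesis using f by (simp add: finsupp_iff)
qed


lemma tmul_tone_left_word: "tmul tone (word u) = (word u::('b,'k::comm_ring_1) tens)"
  by (simp add: tone_def tmul_word_word)

lemma tmul_tone_right_word: "tmul (word u) tone = (word u::('b,'k::comm_ring_1) tens)"
  by (simp add: tone_def tmul_word_word)

lemma tmul_tone_left[simp]: "finsupp f \<Longrightarrow> tmul tone f = (f::('b,'k::comm_ring_1) tens)"
  by (induction f rule: finsupp_induct)
     (simp_all add: tmul_tadd_right tmul_tsmult_right tmul_tone_left_word)

lemma tmul_tone_right[simp]: "finsupp f \<Longrightarrow> tmul f tone = (f::('b,'k::comm_ring_1) tens)"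
  by (induction f rule: finsupp_induct)
     (simp_all add: tmul_tadd_left tmul_tsmult_left tmul_tone_right_word)

lemma tmul_assoc:
  fixes x y z :: "('b,'k::comm_ring_1) tens"
  assumes "finsupp x" "finsupp y" "finsupp z"
  shows "tmul (tmul x y) z = tmul x (tmul y z)"
  using assms(1)
proof (induction x rule: finsupp_induct)
  case (word u)
  show ?case using assms(2)
  proof (induction y rule: finsupp_induct)
    case (word v)
    show ?case using assms(3)
      by (induction z rule: finsupp_induct)
         (simp_all add: tmul_tadd_left tmul_tadd_right tmul_tsmult_left tmul_tsmult_right tmul_word_word)
  qed (simp_all add: tmul_tadd_left tmul_tadd_right tmul_tsmult_left tmul_tsmult_right)
qed (simp_all add: tmul_tadd_left tmul_tadd_right tmul_tsmult_left tmul_tsmult_right)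

lemma gen_word: "tmul (gen b) (word w) = (word (b # w) :: ('b,'k::comm_ring_1) tens)"
  by (simp add: gen_def tmul_word_word)

definition lin :: "('b list \<Rightarrow> ('c, 'k::comm_ring_1) tens) \<Rightarrow> ('b, 'k) tens \<Rightarrow> ('c, 'k) tens" where
  "lin g f = (\<lambda>u. \<Sum>w\<in>supp f. f w * g w u)"

lemma lin_superset:
  assumes "finite A" "supp f \<subseteq> A"
  shows "lin g f = (\<lambda>u. \<Sum>w\<in>A. f w * g w u)"
  unfolding lin_def
proof
  fix u
  show "(\<Sum>w\<in>supp f. f w * g w u) = (\<Sum>w\<in>A. f w * g w u)"
    by (rule sum.mono_neutral_left) (use assms in \<open>auto simp: supp_def\<close>)
qed

lemma lin_tadd:
  assumes "finsupp x" "finsupp y"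
  shows "lin g (tadd x y) = tadd (lin g x) (lin g y)"
proof -
  let ?A = "supp x \<union> supp y"
  have A: "finite ?A" using assms by (simp add: finsupp_iff)
  have "supp (tadd x y) \<subseteq> ?A" by (auto simp: supp_def tadd_def)
  then show ?thesis
    using lin_superset[OF A, of "tadd x y" g] lin_superset[OF A, of x g] lin_superset[OF A, of y g]
    by (auto simp: tadd_def distrib_right sum.distrib)
qed

lemma lin_tsmult:
  assumes "finsupp x"
  shows "lin g (tsmult c x) = tsmult c (lin g x)"
proof -
  have A: "finite (supp x)" using assms by (simp add: finsupp_iff)
  have "supp (tsmult c x) \<subseteq> supp x" by (auto simp: supp_def tsmult_def)
  then show ?thesis
    using lin_superset[OF A, of "tsmult c x" g] lin_superset[OF A, of x g]
    by (auto simp: tsmult_def sum_distrib_left mult.assoc)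
qed

lemma lin_tzero[simp]: "lin g tzero = tzero"
  by (simp add: lin_def supp_def tzero_def)

lemma lin_word[simp]: "lin g (word v) = g v"
proof -
  have "lin g (word v) = (\<lambda>u. \<Sum>w\<in>{v}. word v w * g w u)"
    by (rule lin_superset) (auto simp: supp_def word_def)
  then show ?thesis by (simp add: word_def)
qed

lemma lin_tsub:
  assumes "finsupp x" "finsupp y"
  shows "lin g (tsub x y) = tsub (lin g x) (lin g y)"
  using assms by (simp add: tsub_as_add lin_tadd lin_tsmult)

lemma finsupp_lin[simp]:
  assumes "finsupp f" "\<And>w. finsupp (g w)"
  shows "finsupp (lin g f)"
  using assms(1) by (induction f rule: finsupp_induct) (simp_all add: lin_tadd lin_tsmult assms(2))

lemma tens_hom_lin: "tens_hom \<phi> = lin (wordprod \<phi>)"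
  by (auto simp: tens_hom_def lin_def supp_def)

definition supp1 :: "('b, 'k::zero) tens \<Rightarrow> 'b set" where
  "supp1 f = {b. f [b] \<noteq> 0}"

lemma deg1_finite_supp1: "deg1 f \<Longrightarrow> finite (supp1 f)"
proof -
  assume "deg1 f"
  then have "finite {w. f w \<noteq> 0}" by (simp add: deg1_def finsupp_def)
  then have "finite ((\<lambda>w. hd w) ` {w. f w \<noteq> 0})" by simp
  moreover have "supp1 f \<subseteq> (\<lambda>w. hd w) ` {w. f w \<noteq> 0}"
    by (auto simp: supp1_def intro!: image_eqI[of _ _ "[_]"])
  ultimately show ?thesis by (rule finite_subset[rotated])
qed

lemma deg1_tzero[simp]: "deg1 tzero"
  unfolding deg1_def by (intro conjI finsupp_tzero) (simp add: tzero_def)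

lemma deg1_gen[simp]: "deg1 (gen b)"
  unfolding deg1_def by (intro conjI finsupp_gen) (simp add: gen_def word_def)

lemma deg1_tadd[simp]: "deg1 f \<Longrightarrow> deg1 g \<Longrightarrow> deg1 (tadd f (g::('b,'k::monoid_add) tens))"
  unfolding deg1_def using finsupp_tadd[of f g] by (auto simp: tadd_def)

lemma deg1_tsub[simp]: "deg1 f \<Longrightarrow> deg1 g \<Longrightarrow> deg1 (tsub f (g::('b,'k::group_add) tens))"
  unfolding deg1_def using finsupp_tsub[of f g] by (auto simp: tsub_def)

lemma deg1_tsmult[simp]: "deg1 f \<Longrightarrow> deg1 (tsmult c (f::('b,'k::mult_zero) tens))"
  unfolding deg1_def using finsupp_tsmult[of f c] by (auto simp: tsmult_def)

lemma deg1_finsupp: "deg1 f \<Longrightarrow> finsupp f"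
  by (simp add: deg1_def)

lemma deg1_induct[consumes 1, case_names zero add smult gen]:
  assumes f: "deg1 (f::('b,'k::comm_ring_1) tens)"
    and z: "P tzero"
    and a: "\<And>x y. deg1 x \<Longrightarrow> deg1 y \<Longrightarrow> P x \<Longrightarrow> P y \<Longrightarrow> P (tadd x y)"
    and s: "\<And>c x. deg1 x \<Longrightarrow> P x \<Longrightarrow> P (tsmult c x)"
    and g: "\<And>b. P (gen b)"
  shows "P f"
proof -
  have "\<forall>f. deg1 f \<and> supp1 f = S \<longrightarrow> P f" if "finite S" for S
    using that
  proof (induction S rule: finite_induct)
    case empty
    show ?case
    proof (intro allI impI)
      fix f :: "('b,'k) tens" assume "deg1 f \<and> supp1 f = {}"
      then have "f = tzero"
        apply (auto simp: supp1_def tzero_def deg1_def fun_eq_iff)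
        by (metis length_0_conv length_Suc_conv)
      then show "P f" using z by simp
    qed
  next
    case (insert x F)
    show ?case
    proof (intro allI impI)
      fix f :: "('b,'k) tens" assume sf: "deg1 f \<and> supp1 f = insert x F"
      let ?g = "f([x] := 0)"
      have dg: "deg1 ?g" using sf by (auto simp: deg1_def finsupp_def
            intro: finite_subset[of _ "{w. f w \<noteq> 0}"])
      have sg: "supp1 ?g = F" using insert sf by (auto simp: supp1_def)
      have "P ?g" using insert.IH sg dg by blast
      have eq: "f = tadd (tsmult (f [x]) (gen x)) ?g"
        by (auto simp: tadd_def tsmult_def gen_def word_def)
      have "P (tadd (tsmult (f [x]) (gen x)) ?g)"
        by (rule a[OF _ dg s[OF _ g] \<open>P ?g\<close>]) simp_all
      then show "P f" using eq by simp
    qed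
  qed
  then show ?thesis using f deg1_finite_supp1 by blast
qed

definition lin1 :: "('b \<Rightarrow> ('c, 'k::comm_ring_1) tens) \<Rightarrow> ('b, 'k) tens \<Rightarrow> ('c, 'k) tens" where
  "lin1 g f = (\<lambda>u. \<Sum>b\<in>supp1 f. f [b] * g b u)"

lemma lin1_superset:
  assumes "finite A" "supp1 f \<subseteq> A"
  shows "lin1 g f = (\<lambda>u. \<Sum>b\<in>A. f [b] * g b u)"
  unfolding lin1_def
proof
  fix u
  show "(\<Sum>b\<in>supp1 f. f [b] * g b u) = (\<Sum>b\<in>A. f [b] * g b u)"
    by (rule sum.mono_neutral_left) (use assms in \<open>auto simp: supp1_def\<close>)
qed

lemma lin1_tadd:
  assumes "deg1 x" "deg1 y"
  shows "lin1 g (tadd x y) = tadd (lin1 g x) (lin1 g y)"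
proof -
  let ?A = "supp1 x \<union> supp1 y"
  have A: "finite ?A" using assms by (simp add: deg1_finite_supp1)
  have "supp1 (tadd x y) \<subseteq> ?A" by (auto simp: supp1_def tadd_def)
  then show ?thesis
    using lin1_superset[OF A, of "tadd x y" g] lin1_superset[OF A, of x g] lin1_superset[OF A, of y g]
    by (auto simp: tadd_def distrib_right sum.distrib)
qed

lemma lin1_tsmult:
  assumes "deg1 x"
  shows "lin1 g (tsmult c x) = tsmult c (lin1 g x)"
proof -
  have A: "finite (supp1 x)" using assms by (simp add: deg1_finite_supp1)
  have "supp1 (tsmult c x) \<subseteq> supp1 x" by (auto simp: supp1_def tsmult_def)
  then show ?thesis
    using lin1_superset[OF A, of "tsmult c x" g] lin1_superset[OF A, of x g]
    by (auto simp: tsmult_def sum_distrib_left mult.assoc)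
qed

lemma lin1_tzero[simp]: "lin1 g tzero = tzero"
  by (simp add: lin1_def supp1_def tzero_def)

lemma lin1_gen[simp]: "lin1 g (gen b) = g b"
proof -
  have "lin1 g (gen b) = (\<lambda>u. \<Sum>c\<in>{b}. gen b [c] * g c u)"
    by (rule lin1_superset) (auto simp: supp1_def gen_def word_def)
  then show ?thesis by (simp add: gen_def word_def)
qed

lemma lin1_tsub:
  assumes "deg1 x" "deg1 y"
  shows "lin1 g (tsub x y) = tsub (lin1 g x) (lin1 g y)"
  using assms by (simp add: tsub_as_add lin1_tadd lin1_tsmult)

lemma finsupp_lin1[simp]:
  assumes "deg1 f" "\<And>b. finsupp (g b)"
  shows "finsupp (lin1 g f)"
  using assms(1) by (induction f rule: deg1_induct) (simp_all add: lin1_tadd lin1_tsmult assms(2))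

lemma deg1_lin1[simp]:
  assumes "deg1 f" "\<And>b. deg1 (g b)"
  shows "deg1 (lin1 g f)"
  using assms(1) by (induction f rule: deg1_induct) (simp_all add: lin1_tadd lin1_tsmult assms(2))

lemma br_lin_lin1: "br_lin br x y = lin1 (\<lambda>c. lin1 (br c) y) x"
  by (auto simp: br_lin_def lin1_def supp1_def sum_distrib_left mult.assoc)


lemma finsupp_wordprod[simp]: "(\<And>b. finsupp (\<phi> b)) \<Longrightarrow> finsupp (wordprod \<phi> w)"
  by (induction w) simp_all

lemma wordprod_append:
  assumes "\<And>b. finsupp (\<phi> b)"
  shows "wordprod \<phi> (u @ v) = tmul (wordprod \<phi> u) (wordprod \<phi> v)"
  by (induction u) (simp_all add: assms tmul_assoc)

lemma tens_hom_word[simp]: "tens_hom \<phi> (word w) = wordprod \<phi> w"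
  by (simp add: tens_hom_lin)

lemma tens_hom_tadd: "finsupp x \<Longrightarrow> finsupp y \<Longrightarrow> tens_hom \<phi> (tadd x y) = tadd (tens_hom \<phi> x) (tens_hom \<phi> y)"
  by (simp add: tens_hom_lin lin_tadd)

lemma tens_hom_tsub: "finsupp x \<Longrightarrow> finsupp y \<Longrightarrow> tens_hom \<phi> (tsub x y) = tsub (tens_hom \<phi> x) (tens_hom \<phi> y)"
  by (simp add: tens_hom_lin lin_tsub)

lemma tens_hom_tsmult: "finsupp x \<Longrightarrow> tens_hom \<phi> (tsmult c x) = tsmult c (tens_hom \<phi> x)"
  by (simp add: tens_hom_lin lin_tsmult)

lemma tens_hom_tzero[simp]: "tens_hom \<phi> tzero = tzero"
  by (simp add: tens_hom_lin)

lemma finsupp_tens_hom[simp]: "(\<And>b. finsupp (\<phi> b)) \<Longrightarrow> finsupp x \<Longrightarrow> finsupp (tens_hom \<phi> x)"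
  by (simp add: tens_hom_lin)

lemma tens_hom_tone[simp]: "tens_hom \<phi> tone = tone"
  by (simp add: tone_def)

lemma tens_hom_gen[simp]: "finsupp (\<phi> b) \<Longrightarrow> tens_hom \<phi> (gen b) = \<phi> b"
  by (simp add: gen_def)

lemma tens_hom_tmul:
  assumes phi: "\<And>b. finsupp (\<phi> b)" and x: "finsupp x" and y: "finsupp y"
  shows "tens_hom \<phi> (tmul x y) = tmul (tens_hom \<phi> x) (tens_hom \<phi> y)"
  using x
proof (induction x rule: finsupp_induct)
  case (word u)
  show ?case using y
    by (induction y rule: finsupp_induct)
       (simp_all add: phi tmul_tadd_right tmul_tsmult_right tens_hom_tadd tens_hom_tsmult
          tmul_word_word wordprod_append)
qed (simp_all add: phi y tmul_tadd_left tmul_tsmult_left tens_hom_tadd tens_hom_tsmult)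

lemma tens_hom_deg1:
  assumes "\<And>b. deg1 (\<phi> b)" "deg1 x"
  shows "deg1 (tens_hom \<phi> x)"
  using assms(2)
  by (induction x rule: deg1_induct)
     (simp_all add: assms(1) deg1_finsupp tens_hom_tadd tens_hom_tsmult)

definition lsub :: "('b, 'k::comm_ring_1) tens set \<Rightarrow> bool" where
  "lsub K \<longleftrightarrow> tzero \<in> K \<and> (\<forall>x\<in>K. \<forall>y\<in>K. tadd x y \<in> K) \<and> (\<forall>c. \<forall>x\<in>K. tsmult c x \<in> K)
     \<and> (\<forall>x\<in>K. \<forall>a. finsupp a \<longrightarrow> tmul a x \<in> K)"

lemma lsub_lideal: "lsub (lideal_gen S)"
  by (auto simp: lsub_def intro: lideal_gen.intros)

lemma lsub_ideal: "lsub (ideal_gen S)"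
  by (auto simp: lsub_def intro: ideal_gen.intros)

lemma lsub_zero: "lsub K \<Longrightarrow> tzero \<in> K"
  by (simp add: lsub_def)
lemma lsub_add: "lsub K \<Longrightarrow> x \<in> K \<Longrightarrow> y \<in> K \<Longrightarrow> tadd x y \<in> K"
  by (simp add: lsub_def)
lemma lsub_smult: "lsub K \<Longrightarrow> x \<in> K \<Longrightarrow> tsmult c x \<in> K"
  by (simp add: lsub_def)
lemma lsub_mult: "lsub K \<Longrightarrow> x \<in> K \<Longrightarrow> finsupp a \<Longrightarrow> tmul a x \<in> K"
  by (simp add: lsub_def)
lemma lsub_sub: "lsub K \<Longrightarrow> x \<in> K \<Longrightarrow> y \<in> K \<Longrightarrow> tsub x (y::('b,'k::comm_ring_1) tens) \<in> K"
  by (simp add: tsub_as_add lsub_add lsub_smult)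

lemma ideal_rmult: "x \<in> ideal_gen S \<Longrightarrow> finsupp a \<Longrightarrow> tmul x a \<in> ideal_gen S"
  by (rule ideal_gen.rmult)

lemma ideal_finsupp: "x \<in> ideal_gen S \<Longrightarrow> (\<And>s. s \<in> S \<Longrightarrow> finsupp s) \<Longrightarrow> finsupp x"
  by (induction x rule: ideal_gen.induct) auto

lemma lideal_finsupp: "x \<in> lideal_gen S \<Longrightarrow> (\<And>s. s \<in> S \<Longrightarrow> finsupp s) \<Longrightarrow> finsupp x"
  by (induction x rule: lideal_gen.induct) auto

lemma lideal_base: "s \<in> S \<Longrightarrow> s \<in> lideal_gen S"
  by (rule lideal_gen.base)



section \<open>Brackets\<close>

lemma lin1_fun_tadd: "lin1 (\<lambda>b. tadd (F b) (G b)) f = tadd (lin1 F f) (lin1 G f)"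
  by (auto simp: lin1_def tadd_def distrib_left sum.distrib)

lemma lin1_fun_tsmult: "lin1 (\<lambda>b. tsmult c (F b)) f = tsmult c (lin1 F f)"
  by (auto simp: lin1_def tsmult_def sum_distrib_left mult.left_commute)

lemma lin1_fun_tsub: "lin1 (\<lambda>b. tsub (F b) (G b)) f = tsub (lin1 F f) (lin1 G f)"
  by (auto simp: lin1_def tsub_def right_diff_distrib sum_subtractf)

lemma lin1_fun_tzero: "lin1 (\<lambda>b. tzero) f = tzero"
  by (auto simp: lin1_def tzero_def)

lemma lin_fun_tadd: "lin (\<lambda>b. tadd (F b) (G b)) f = tadd (lin F f) (lin G f)"
  by (auto simp: lin_def tadd_def distrib_left sum.distrib)

lemma lin_fun_tsmult: "lin (\<lambda>b. tsmult c (F b)) f = tsmult c (lin F f)"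
  by (auto simp: lin_def tsmult_def sum_distrib_left mult.left_commute)

lemma lin_fun_tsub: "lin (\<lambda>b. tsub (F b) (G b)) f = tsub (lin F f) (lin G f)"
  by (auto simp: lin_def tsub_def right_diff_distrib sum_subtractf)

lemma brl_gen_gen[simp]: "br_lin B (gen a) (gen b) = B a b"
  by (simp add: br_lin_lin1)

lemma brl_tadd_left: "deg1 x \<Longrightarrow> deg1 y \<Longrightarrow> br_lin B (tadd x y) z = tadd (br_lin B x z) (br_lin B y z)"
  by (simp add: br_lin_lin1 lin1_tadd)
lemma brl_tsmult_left: "deg1 x \<Longrightarrow> br_lin B (tsmult c x) z = tsmult c (br_lin B x z)"
  by (simp add: br_lin_lin1 lin1_tsmult)
lemma brl_tsub_left: "deg1 x \<Longrightarrow> deg1 y \<Longrightarrow> br_lin B (tsub x y) z = tsub (br_lin B x z) (br_lin B y z)"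
  by (simp add: br_lin_lin1 lin1_tsub)
lemma brl_tzero_left[simp]: "br_lin B tzero z = tzero"
  by (simp add: br_lin_lin1)
lemma brl_tadd_right: "deg1 x \<Longrightarrow> deg1 y \<Longrightarrow> br_lin B z (tadd x y) = tadd (br_lin B z x) (br_lin B z y)"
  by (simp add: br_lin_lin1 lin1_tadd lin1_fun_tadd)
lemma brl_tsmult_right: "deg1 x \<Longrightarrow> br_lin B z (tsmult c x) = tsmult c (br_lin B z x)"
  by (simp add: br_lin_lin1 lin1_tsmult lin1_fun_tsmult)
lemma brl_tsub_right: "deg1 x \<Longrightarrow> deg1 y \<Longrightarrow> br_lin B z (tsub x y) = tsub (br_lin B z x) (br_lin B z y)"
  by (simp add: br_lin_lin1 lin1_tsub lin1_fun_tsub)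
lemma brl_tzero_right[simp]: "br_lin B z tzero = tzero"
  by (simp add: br_lin_lin1 lin1_fun_tzero)

lemma deg1_brl: "(\<And>a b. deg1 (B a b)) \<Longrightarrow> deg1 x \<Longrightarrow> deg1 y \<Longrightarrow> deg1 (br_lin B x y)"
  by (simp add: br_lin_lin1)

lemma deg1_If[simp]: "deg1 x \<Longrightarrow> deg1 y \<Longrightarrow> deg1 (if P then x else y)"
  by simp


lemma brl_antisym:
  assumes B: "\<And>a b. B a b = tsmult (-1) (B b a)" and x: "deg1 x" and y: "deg1 y"
  shows "br_lin B x y = tsmult (-1) (br_lin B y x)"
  using x
proof (induction x rule: deg1_induct)
  case (gen a)
  show ?case using y
  proof (induction y rule: deg1_induct)
    case (gen b)
    show ?case by (simp only: brl_gen_gen) (rule B)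
  qed (simp_all add: brl_tadd_left brl_tadd_right brl_tsmult_left brl_tsmult_right tsmult_tadd mult.commute)
qed (simp_all add: brl_tadd_left brl_tadd_right brl_tsmult_left brl_tsmult_right tsmult_tadd y mult.commute)


lemma brl_jacobi:
  assumes B: "\<And>a b. deg1 (B a b)"
    and J: "\<And>a b c. br_lin B (B a b) (gen c) = tadd (br_lin B (B a c) (gen b)) (br_lin B (gen a) (B b c))"
    and x: "deg1 x" and y: "deg1 y" and z: "deg1 z"
  shows "br_lin B (br_lin B x y) z = tadd (br_lin B (br_lin B x z) y) (br_lin B x (br_lin B y z))"
proof -
  note D = deg1_brl[OF B]
  note L = brl_tadd_left brl_tadd_right brl_tsmult_left brl_tsmult_right
  show ?thesis
  using x
  proof (induction x rule: deg1_induct)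
    case (add x1 x2)
    then show ?case using y z
      by (simp add: L D) (simp add: tadd_def fun_eq_iff add_ac)
  next
    case (smult c x)
    then show ?case using y z
      by (simp add: L D) (simp add: tadd_def tsmult_def fun_eq_iff distrib_left)
  next
    case (gen a)
    show ?case using y
    proof (induction y rule: deg1_induct)
      case (add y1 y2)
      then show ?case using z
        by (simp add: L D) (simp add: tadd_def fun_eq_iff add_ac)
    next
      case (smult c y)
      then show ?case using z
        by (simp add: L D) (simp add: tadd_def tsmult_def fun_eq_iff distrib_left)
    next
      case (gen b)
      show ?case using z
      proof (induction z rule: deg1_induct)
        case (add z1 z2)
        then show ?case
          by (simp add: L D) (simp add: tadd_def fun_eq_iff add_ac)
      next
        case (smult c z)
        then show ?case
          by (simp add: L D) (simp add: tadd_def tsmult_def fun_eq_iff distrib_left)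
      next
        case (gen c)
        show ?case by (simp only: brl_gen_gen) (rule J)
      qed simp
    qed simp
  qed simp
qed



abbreviation br :: "(bms, 'k::field_char_0) tens \<Rightarrow> (bms, 'k) tens \<Rightarrow> (bms, 'k) tens" where
  "br \<equiv> br_lin bms_br"

lemma deg1_bms_br[simp]: "deg1 (bms_br a b)"
  by (cases a; cases b) (simp_all add: bms_br_def)

lemma bms_br_antisym: "bms_br a b = tsmult (-1) (bms_br b (a::bms) :: (bms,'k::field_char_0) tens)"
proof (cases a; cases b)
  fix n m assume [simp]: "a = L n" "b = L m"
  show ?thesis
    by (auto simp: bms_br_def fun_eq_iff tadd_def tsmult_def tzero_def gen_def word_def
        add.commute power2_eq_square algebra_simps) (simp add: add_divide_distrib[symmetric])
qed (auto simp: bms_br_def fun_eq_iff tadd_def tsmult_def tzero_def add.commute)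


lemma brl_If_left: "br_lin B (if P then x else y) z = (if P then br_lin B x z else br_lin B y z)"
  by simp
lemma brl_If_right: "br_lin B z (if P then x else y) = (if P then br_lin B z x else br_lin B z y)"
  by simp

lemmas brl_lin = brl_tadd_left brl_tadd_right brl_tsmult_left brl_tsmult_right brl_If_left brl_If_right

lemma jac_LLL: "br (bms_br (L n) (L m)) (gen (L k)) = tadd (br (bms_br (L n) (L k)) (gen (L m))) (br (gen (L n)) (bms_br (L m) (L k)) :: (bms,'k::field_char_0) tens)"
  apply (simp add: bms_br_def brl_lin)
  apply (simp add: bms_br_def fun_eq_iff tadd_def tsmult_def tzero_def gen_def word_def add_ac)
  apply (auto simp: algebra_simps power2_eq_square)
  done


lemma add_eq_neg_iff2: "(a::int) + b = - c \<longleftrightarrow> c = - a - b"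
  by auto

lemma mult2_eq_neg_iff: "(a::int) * 2 = - c \<longleftrightarrow> c = - 2 * a"
  by auto

lemma jac_bms: "br (bms_br a b) (gen c) = tadd (br (bms_br a c) (gen b)) (br (gen a) (bms_br b c) :: (bms,'k::field_char_0) tens)"
  apply (cases a; cases b; cases c)
  apply (simp_all add: bms_br_def brl_lin)
  apply (simp_all add: bms_br_def fun_eq_iff tadd_def tsmult_def tzero_def gen_def word_def add_ac)
  apply (auto simp: algebra_simps power2_eq_square)
  apply (simp_all add: add_eq_neg_iff2 mult2_eq_neg_iff)
  apply (simp_all add: field_simps power2_eq_square)
  done


lemma deg1_br[simp]: "deg1 f \<Longrightarrow> deg1 g \<Longrightarrow> deg1 (br f g)"
  by (rule deg1_brl) simp_all

lemma br_antisym: "deg1 f \<Longrightarrow> deg1 g \<Longrightarrow> br f g = tsmult (-1) (br g f)"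
  by (rule brl_antisym[OF bms_br_antisym])

lemma br_jacobi: "deg1 f \<Longrightarrow> deg1 g \<Longrightarrow> deg1 h \<Longrightarrow>
   br (br f g) h = tadd (br (br f h) g) (br f (br g h))"
  by (rule brl_jacobi[OF deg1_bms_br jac_bms])

section \<open>The subalgebra\<close>

definition Oint :: "int \<Rightarrow> (bhat, 'k::field_char_0) tens" where
  "Oint k = (if k > 0 then gen (Ob (nat k - 1)) else if k < 0 then tsmult (-1) (gen (Ob (nat (-k) - 1))) else tzero)"

definition Pint :: "int \<Rightarrow> (bhat, 'k::field_char_0) tens" where
  "Pint k = gen (Pb (nat \<bar>k\<bar>))"

lemma finsupp_If[simp]: "finsupp x \<Longrightarrow> finsupp y \<Longrightarrow> finsupp (if P then x else y)"
  by simp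

lemma deg1_Oint[simp]: "deg1 (Oint k)" by (simp add: Oint_def)
lemma deg1_Pint[simp]: "deg1 (Pint k)" by (simp add: Pint_def)
lemma finsupp_Oint[simp]: "finsupp (Oint k)" by (simp add: Oint_def)
lemma finsupp_Pint[simp]: "finsupp (Pint k)" by (simp add: Pint_def)

lemma deg1_bhat_emb[simp]: "deg1 (bhat_emb c)"
  by (cases c) (simp_all add: bhat_emb_def)
lemma finsupp_bhat_emb[simp]: "finsupp (bhat_emb c)"
  by (simp add: deg1_finsupp)

abbreviation emb :: "(bhat, 'k::field_char_0) tens \<Rightarrow> (bms, 'k) tens" where
  "emb \<equiv> tens_hom bhat_emb"

lemma emb_gen[simp]: "emb (gen c) = bhat_emb c"
  by simp

lemma emb_Oint: "emb (Oint k) = tsub (gen (L k)) (gen (L (-k)))"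
proof (cases "k > 0")
  case True
  then show ?thesis by (simp add: Oint_def bhat_emb_def)
next
  case False
  show ?thesis
  proof (cases "k < 0")
    case True
    then have "emb (Oint k) = tsmult (-1) (bhat_emb (Ob (nat (-k) - 1)))"
      by (simp add: Oint_def tens_hom_tsmult)
    also have "\<dots> = tsub (gen (L k)) (gen (L (-k)))"
      using True by (auto simp: bhat_emb_def fun_eq_iff tsub_def tsmult_def)
    finally show ?thesis .
  next
    case False
    then have "k = 0" using \<open>\<not> k > 0\<close> by simp
    then show ?thesis by (simp add: Oint_def)
  qed
qed

lemma emb_Pint: "emb (Pint k) = tadd (gen (M k)) (gen (M (-k)))"
  by (auto simp: Pint_def bhat_emb_def fun_eq_iff tadd_def abs_if)

lemma bhat_emb_Ob: "bhat_emb (Ob j) = emb (Oint (int j + 1))"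
  by (simp add: emb_Oint bhat_emb_def)

lemma bhat_emb_Pb: "bhat_emb (Pb j) = emb (Pint (int j))"
  by (simp add: emb_Pint bhat_emb_def)

definition bhat_br :: "bhat \<Rightarrow> bhat \<Rightarrow> (bhat, 'k::field_char_0) tens" where
  "bhat_br c d = (case (c, d) of
     (Ob i, Ob j) \<Rightarrow> tsub (tsmult (of_int (int i - int j)) (Oint (int i + int j + 2)))
                         (tsmult (of_int (int i + int j + 2)) (Oint (int i - int j)))
   | (Ob i, Pb j) \<Rightarrow> tadd (tadd (tsmult (of_int (int i + 1 - int j)) (Pint (int i + 1 + int j)))
                               (tsmult (of_int (int i + 1 + int j)) (Pint (int i + 1 - int j))))
                         (if int j = int i + 1 then tsmult (of_int ((int i + 1) * ((int i + 1)^2 - 1)) / 6) (gen CMb) else tzero)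
   | (Pb j, Ob i) \<Rightarrow> tsmult (-1) (tadd (tadd (tsmult (of_int (int i + 1 - int j)) (Pint (int i + 1 + int j)))
                               (tsmult (of_int (int i + 1 + int j)) (Pint (int i + 1 - int j))))
                         (if int j = int i + 1 then tsmult (of_int ((int i + 1) * ((int i + 1)^2 - 1)) / 6) (gen CMb) else tzero))
   | _ \<Rightarrow> tzero)"

lemma deg1_bhat_br[simp]: "deg1 (bhat_br c d)"
  by (cases c; cases d) (simp_all add: bhat_br_def)

lemma emb_lin: "finsupp x \<Longrightarrow> finsupp y \<Longrightarrow> emb (tadd x y) = tadd (emb x) (emb y)"
  "finsupp x \<Longrightarrow> finsupp y \<Longrightarrow> emb (tsub x y) = tsub (emb x) (emb y)"
  "finsupp x \<Longrightarrow> emb (tsmult c x) = tsmult c (emb x)"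
  "emb (if P then x else y) = (if P then emb x else emb y)"
  by (simp_all add: tens_hom_tadd tens_hom_tsub tens_hom_tsmult)

lemma int_eq_1_plus: "int a = 1 + int b \<longleftrightarrow> a = Suc b" "int a = int b + 1 \<longleftrightarrow> a = Suc b"
  by auto

lemma emb_bhat_br: "emb (bhat_br c d) = br (bhat_emb c) (bhat_emb d)"
  apply (cases c; cases d)
  apply (simp_all add: bhat_br_def emb_lin)
  apply (simp_all add: emb_Oint emb_Pint bhat_emb_def brl_lin brl_tsub_left brl_tsub_right)
  apply (simp_all add: bms_br_def fun_eq_iff tadd_def tsub_def tsmult_def tzero_def gen_def word_def add_ac)
  apply (auto simp: algebra_simps power2_eq_square int_eq_1_plus)
  apply (simp_all add: field_simps power2_eq_square)
  done


lemma rel_bilinear: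
  assumes B: "\<And>a b. deg1 (B a b)"
    and base: "\<And>a b. tsub (tsub (tmul (gen a) (gen b)) (tmul (gen b) (gen a))) (B a b) \<in> K"
    and K: "lsub K"
    and x: "deg1 x" and y: "deg1 y"
  shows "tsub (tsub (tmul x y) (tmul y x)) (br_lin B x y) \<in> K"
proof -
  note D = deg1_brl[OF B]
  have eq_add: "tsub (tsub (tmul (tadd x1 x2) y) (tmul y (tadd x1 x2))) (br_lin B (tadd x1 x2) y) =
     tadd (tsub (tsub (tmul x1 y) (tmul y x1)) (br_lin B x1 y)) (tsub (tsub (tmul x2 y) (tmul y x2)) (br_lin B x2 y))"
    if "deg1 x1" "deg1 x2" for x1 x2 y
    using that by (simp add: tmul_tadd_left tmul_tadd_right brl_tadd_left) (simp add: fun_eq_iff tadd_def tsub_def)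
  have eq_sm: "tsub (tsub (tmul (tsmult c x1) y) (tmul y (tsmult c x1))) (br_lin B (tsmult c x1) y) =
     tsmult c (tsub (tsub (tmul x1 y) (tmul y x1)) (br_lin B x1 y))"
    if "deg1 x1" for x1 y c
    using that by (simp add: tmul_tsmult_left tmul_tsmult_right brl_tsmult_left) (simp add: fun_eq_iff tsmult_def tsub_def algebra_simps)
  have eq_add2: "tsub (tsub (tmul x (tadd y1 y2)) (tmul (tadd y1 y2) x)) (br_lin B x (tadd y1 y2)) =
     tadd (tsub (tsub (tmul x y1) (tmul y1 x)) (br_lin B x y1)) (tsub (tsub (tmul x y2) (tmul y2 x)) (br_lin B x y2))"
    if "deg1 y1" "deg1 y2" for y1 y2 x
    using that by (simp add: tmul_tadd_left tmul_tadd_right brl_tadd_right) (simp add: fun_eq_iff tadd_def tsub_def)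
  have eq_sm2: "tsub (tsub (tmul x (tsmult c y1)) (tmul (tsmult c y1) x)) (br_lin B x (tsmult c y1)) =
     tsmult c (tsub (tsub (tmul x y1) (tmul y1 x)) (br_lin B x y1))"
    if "deg1 y1" for y1 x c
    using that by (simp add: tmul_tsmult_left tmul_tsmult_right brl_tsmult_right) (simp add: fun_eq_iff tsmult_def tsub_def algebra_simps)
  have z: "tsub (tsub (tmul tzero y) (tmul y tzero)) (br_lin B tzero y) = tzero"
    "tsub (tsub (tmul y tzero) (tmul tzero y)) (br_lin B y tzero) = tzero" for y
    by simp_all
  show ?thesis using x
  proof (induction x rule: deg1_induct)
    case zero show ?case using z lsub_zero[OF K] by simp
  next
    case (add x1 x2) then show ?case using eq_add lsub_add[OF K] by simp
  next
    case (smult c x1) then show ?case using eq_sm lsub_smult[OF K] by simp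
  next
    case (gen a)
    show ?case using y
    proof (induction y rule: deg1_induct)
      case zero show ?case using z lsub_zero[OF K] by simp
    next
      case (add y1 y2) then show ?case using eq_add2 lsub_add[OF K] by simp
    next
      case (smult c y1) then show ?case using eq_sm2 lsub_smult[OF K] by simp
    next
      case (gen b) then show ?case using base by simp
    qed
  qed
qed

abbreviation bb :: "(bhat, 'k::field_char_0) tens \<Rightarrow> (bhat, 'k) tens \<Rightarrow> (bhat, 'k) tens" where
  "bb \<equiv> br_lin bhat_br"

lemma deg1_bb[simp]: "deg1 x \<Longrightarrow> deg1 y \<Longrightarrow> deg1 (bb x y)"
  by (rule deg1_brl) simp_all

lemma emb_deg1[simp]: "deg1 x \<Longrightarrow> deg1 (emb x)"
  by (rule tens_hom_deg1) simp_all

lemma emb_bb: "deg1 x \<Longrightarrow> deg1 y \<Longrightarrow> emb (bb x y) = br (emb x) (emb y)"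
proof (induction x rule: deg1_induct)
  case (gen a)
  then show ?case
  proof (induction y rule: deg1_induct)
    case (add x y)
    then show ?case by (simp add: brl_tadd_right emb_lin deg1_finsupp)
  next
    case (smult c x)
    then show ?case by (simp add: brl_tsmult_right emb_lin deg1_finsupp)
  qed (simp_all add: emb_bhat_br)
next
  case (add x1 x2)
  then show ?case by (simp add: brl_tadd_left emb_lin deg1_finsupp)
next
  case (smult c x)
  then show ?case by (simp add: brl_tsmult_left emb_lin deg1_finsupp)
qed simp

lemma bhat_rel_base: "tsub (tsub (tmul (gen a) (gen b)) (tmul (gen b) (gen a))) (bhat_br a b) \<in> ideal_gen bhat_rel"
  by (rule ideal_gen.base) (unfold bhat_rel_def, blast intro: emb_bhat_br deg1_bhat_br)

lemma bhat_rel_deg1: "deg1 x \<Longrightarrow> deg1 y \<Longrightarrow> tsub (tsub (tmul x y) (tmul y x)) (bb x y) \<in> ideal_gen bhat_rel"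
  by (rule rel_bilinear[OF deg1_bhat_br bhat_rel_base lsub_ideal])

lemma bms_rel_base: "tsub (tsub (tmul (gen a) (gen b)) (tmul (gen b) (gen a))) (bms_br a b) \<in> ideal_gen bms_rel"
  by (rule ideal_gen.base) (auto simp: bms_rel_def)

lemma bms_rel_deg1: "deg1 x \<Longrightarrow> deg1 y \<Longrightarrow> tsub (tsub (tmul x y) (tmul y x)) (br x y) \<in> ideal_gen bms_rel"
  by (rule rel_bilinear[OF deg1_bms_br bms_rel_base lsub_ideal])



locale vctx =
  fixes hL hM cL cM :: "'k::field_char_0"
begin

definition pi :: "bms \<Rightarrow> (bhat, 'k) tens" where
  "pi b = (case b of
     L n \<Rightarrow> (if n = 0 then tsmult hL tone else if n < 0 then Oint n else tzero)
   | M n \<Rightarrow> (if n = 0 then tsmult hM tone else if n < 0 then Pint n else tzero)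
   | CL \<Rightarrow> tsmult cL tone
   | CM \<Rightarrow> tsmult cM tone)"

lemma finsupp_pi[simp]: "finsupp (pi b)"
  by (cases b) (simp_all add: pi_def)

primrec Rw :: "bhat list \<Rightarrow> bms \<Rightarrow> (bhat, 'k) tens" where
  "Rw [] = pi"
| "Rw (c # w) = (\<lambda>b. tadd (tmul (gen c) (Rw w b)) (lin1 (Rw w) (br (gen b) (bhat_emb c))))"

lemma finsupp_Rw[simp]: "finsupp (Rw w b)"
  by (induction w arbitrary: b) simp_all

definition R :: "bms \<Rightarrow> (bhat, 'k) tens \<Rightarrow> (bhat, 'k) tens" where
  "R b y = lin (\<lambda>w. Rw w b) y"

definition Rl :: "(bms, 'k) tens \<Rightarrow> (bhat, 'k) tens \<Rightarrow> (bhat, 'k) tens" where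
  "Rl f y = lin1 (\<lambda>b. R b y) f"

lemma R_word[simp]: "R b (word w) = Rw w b"
  by (simp add: R_def)

lemma finsupp_R[simp]: "finsupp y \<Longrightarrow> finsupp (R b y)"
  by (simp add: R_def)

lemma R_tadd: "finsupp x \<Longrightarrow> finsupp y \<Longrightarrow> R b (tadd x y) = tadd (R b x) (R b y)"
  by (simp add: R_def lin_tadd)
lemma R_tsmult: "finsupp x \<Longrightarrow> R b (tsmult c x) = tsmult c (R b x)"
  by (simp add: R_def lin_tsmult)
lemma R_tsub: "finsupp x \<Longrightarrow> finsupp y \<Longrightarrow> R b (tsub x y) = tsub (R b x) (R b y)"
  by (simp add: R_def lin_tsub)
lemma R_tzero[simp]: "R b tzero = tzero"
  by (simp add: R_def)
lemma R_tone[simp]: "R b tone = pi b"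
  by (simp add: tone_def)

lemma finsupp_Rl[simp]: "deg1 f \<Longrightarrow> finsupp y \<Longrightarrow> finsupp (Rl f y)"
  by (simp add: Rl_def)

lemma Rl_gen[simp]: "Rl (gen b) y = R b y"
  by (simp add: Rl_def)

lemma Rl_tadd_left: "deg1 f \<Longrightarrow> deg1 g \<Longrightarrow> Rl (tadd f g) y = tadd (Rl f y) (Rl g y)"
  by (simp add: Rl_def lin1_tadd)
lemma Rl_tsmult_left: "deg1 f \<Longrightarrow> Rl (tsmult c f) y = tsmult c (Rl f y)"
  by (simp add: Rl_def lin1_tsmult)
lemma Rl_tsub_left: "deg1 f \<Longrightarrow> deg1 g \<Longrightarrow> Rl (tsub f g) y = tsub (Rl f y) (Rl g y)"
  by (simp add: Rl_def lin1_tsub)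
lemma Rl_tzero_left[simp]: "Rl tzero y = tzero"
  by (simp add: Rl_def)

lemma Rl_tadd_right: "finsupp x \<Longrightarrow> finsupp y \<Longrightarrow> Rl f (tadd x y) = tadd (Rl f x) (Rl f y)"
  by (simp add: Rl_def R_tadd lin1_fun_tadd)
lemma Rl_tsmult_right: "finsupp x \<Longrightarrow> Rl f (tsmult c x) = tsmult c (Rl f x)"
  by (simp add: Rl_def R_tsmult lin1_fun_tsmult)
lemma Rl_tsub_right: "finsupp x \<Longrightarrow> finsupp y \<Longrightarrow> Rl f (tsub x y) = tsub (Rl f x) (Rl f y)"
  by (simp add: Rl_def R_tsub lin1_fun_tsub)
lemma Rl_tzero_right[simp]: "Rl f tzero = tzero"
  by (simp add: Rl_def lin1_fun_tzero)

lemma Rl_word: "Rl f (word w) = lin1 (Rw w) f"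
  by (simp add: Rl_def)

lemma R_cons:
  assumes y: "finsupp y"
  shows "R b (tmul (gen c) y) = tadd (tmul (gen c) (R b y)) (Rl (br (gen b) (bhat_emb c)) y)"
  using y
proof (induction y rule: finsupp_induct)
  case zero
  then show ?case by simp
next
  case (add x y)
  then show ?case
    by (simp add: tmul_tadd_right R_tadd Rl_tadd_right) (simp add: fun_eq_iff tadd_def)
next
  case (smult c' x)
  then show ?case
    by (simp add: tmul_tsmult_right R_tsmult Rl_tsmult_right) (simp add: fun_eq_iff tadd_def tsmult_def algebra_simps)
next
  case (word u)
  then show ?case by (simp add: gen_word Rl_word)
qed

lemma Rl_cons:
  assumes f: "deg1 f" and y: "finsupp y"
  shows "Rl f (tmul (gen c) y) = tadd (tmul (gen c) (Rl f y)) (Rl (br f (bhat_emb c)) y)"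
  using f
proof (induction f rule: deg1_induct)
  case zero
  then show ?case by simp
next
  case (add f g)
  then show ?case
    by (simp add: Rl_tadd_left brl_tadd_left tmul_tadd_right) (simp add: fun_eq_iff tadd_def algebra_simps)
next
  case (smult c' f)
  then show ?case
    by (simp add: Rl_tsmult_left brl_tsmult_left tmul_tsmult_right) (simp add: fun_eq_iff tadd_def tsmult_def algebra_simps)
next
  case (gen b)
  then show ?case using R_cons[OF y] by simp
qed


lemma Rl_mul:
  assumes f: "deg1 f" and g: "deg1 g" and y: "finsupp y"
  shows "Rl f (tmul g y) = tadd (tmul g (Rl f y)) (Rl (br f (emb g)) y)"
  using g
proof (induction g rule: deg1_induct)
  case zero
  then show ?case by simp
next
  case (add g1 g2)
  then show ?case using f y
    by (simp add: tmul_tadd_left Rl_tadd_right Rl_tadd_left emb_lin deg1_finsupp brl_tadd_right)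
       (simp add: fun_eq_iff tadd_def algebra_simps)
next
  case (smult c' g)
  then show ?case using f y
    by (simp add: tmul_tsmult_left Rl_tsmult_right Rl_tsmult_left emb_lin deg1_finsupp brl_tsmult_right)
       (simp add: fun_eq_iff tadd_def tsmult_def algebra_simps)
next
  case (gen c)
  then show ?case using Rl_cons[OF f y] by simp
qed

definition D :: "(bms, 'k) tens \<Rightarrow> (bms, 'k) tens \<Rightarrow> (bhat, 'k) tens \<Rightarrow> (bhat, 'k) tens" where
  "D f g y = tsub (tsub (Rl f (Rl g y)) (Rl g (Rl f y))) (Rl (br f g) y)"

lemma D_cons:
  assumes f: "deg1 f" and g: "deg1 g" and y: "finsupp y"
  shows "D f g (tmul (gen c) y) = tadd (tadd (tmul (gen c) (D f g y)) (D (br f (bhat_emb c)) g y))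
             (D f (br g (bhat_emb c)) y)"
proof -
  let ?e = "bhat_emb c"
  have J: "br (br f g) ?e = tadd (br (br f ?e) g) (br f (br g ?e))"
    by (rule br_jacobi) (simp_all add: f g)
  have 1: "Rl f (Rl g (tmul (gen c) y)) = tadd (tadd (tmul (gen c) (Rl f (Rl g y))) (Rl (br f ?e) (Rl g y)))
            (Rl f (Rl (br g ?e) y))"
    using f g y by (simp add: Rl_cons Rl_tadd_right)
  have 2: "Rl g (Rl f (tmul (gen c) y)) = tadd (tadd (tmul (gen c) (Rl g (Rl f y))) (Rl (br g ?e) (Rl f y)))
            (Rl g (Rl (br f ?e) y))"
    using f g y by (simp add: Rl_cons Rl_tadd_right)
  have 3: "Rl (br f g) (tmul (gen c) y) = tadd (tmul (gen c) (Rl (br f g) y))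
            (tadd (Rl (br (br f ?e) g) y) (Rl (br f (br g ?e)) y))"
    using f g y by (simp add: Rl_cons J Rl_tadd_left)
  show ?thesis
    unfolding D_def 1 2 3
    by (simp add: tmul_tsub_right) (simp add: fun_eq_iff tadd_def tsub_def algebra_simps)
qed

lemma D_tadd: "finsupp x \<Longrightarrow> finsupp y \<Longrightarrow> deg1 f \<Longrightarrow> deg1 g \<Longrightarrow> D f g (tadd x y) = tadd (D f g x) (D f g y)"
  by (simp add: D_def Rl_tadd_right) (simp add: fun_eq_iff tadd_def tsub_def algebra_simps)
lemma D_tsmult: "finsupp x \<Longrightarrow> deg1 f \<Longrightarrow> deg1 g \<Longrightarrow> D f g (tsmult c x) = tsmult c (D f g x)"
  by (simp add: D_def Rl_tsmult_right) (simp add: fun_eq_iff tsmult_def tsub_def algebra_simps)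

lemma D_tadd_left: "deg1 f1 \<Longrightarrow> deg1 f2 \<Longrightarrow> deg1 g \<Longrightarrow> finsupp y \<Longrightarrow> D (tadd f1 f2) g y = tadd (D f1 g y) (D f2 g y)"
  by (simp add: D_def Rl_tadd_right Rl_tadd_left brl_tadd_left) (simp add: fun_eq_iff tadd_def tsub_def algebra_simps)
lemma D_tsmult_left: "deg1 f \<Longrightarrow> deg1 g \<Longrightarrow> finsupp y \<Longrightarrow> D (tsmult c f) g y = tsmult c (D f g y)"
  by (simp add: D_def Rl_tsmult_right Rl_tsmult_left brl_tsmult_left) (simp add: fun_eq_iff tsmult_def tsub_def algebra_simps)
lemma D_tadd_right: "deg1 g1 \<Longrightarrow> deg1 g2 \<Longrightarrow> deg1 f \<Longrightarrow> finsupp y \<Longrightarrow> D f (tadd g1 g2) y = tadd (D f g1 y) (D f g2 y)"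
  by (simp add: D_def Rl_tadd_right Rl_tadd_left brl_tadd_right) (simp add: fun_eq_iff tadd_def tsub_def algebra_simps)
lemma D_tsmult_right: "deg1 f \<Longrightarrow> deg1 g \<Longrightarrow> finsupp y \<Longrightarrow> D f (tsmult c g) y = tsmult c (D f g y)"
  by (simp add: D_def Rl_tsmult_right Rl_tsmult_left brl_tsmult_right) (simp add: fun_eq_iff tsmult_def tsub_def algebra_simps)
lemma D_tzero_left[simp]: "D tzero g y = tzero" by (simp add: D_def)
lemma D_tzero_right[simp]: "D f tzero y = tzero" by (simp add: D_def)

lemma D_all:
  assumes K: "lsub K"
    and base: "\<And>a b. D (gen a) (gen b) tone \<in> K"
  shows "deg1 f \<Longrightarrow> deg1 g \<Longrightarrow> finsupp y \<Longrightarrow> D f g y \<in> K"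
proof -
  have basedeg: "D f g tone \<in> K" if "deg1 f" "deg1 g" for f g
    using that(1)
  proof (induction f rule: deg1_induct)
    case zero then show ?case by (simp add: lsub_zero[OF K])
  next
    case (add f1 f2) then show ?case using that(2) by (simp add: D_tadd_left lsub_add[OF K])
  next
    case (smult c f) then show ?case using that(2) by (simp add: D_tsmult_left lsub_smult[OF K])
  next
    case (gen a)
    show ?case using that(2)
    proof (induction g rule: deg1_induct)
      case zero then show ?case by (simp add: lsub_zero[OF K])
    next
      case (add g1 g2) then show ?case by (simp add: D_tadd_right lsub_add[OF K])
    next
      case (smult c g) then show ?case by (simp add: D_tsmult_right lsub_smult[OF K])
    next
      case (gen b) then show ?case by (rule base)
    qed
  qed
  have words: "\<And>f g. deg1 f \<Longrightarrow> deg1 g \<Longrightarrow> D f g (word w) \<in> K" for w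
  proof (induction w)
    case Nil
    then show ?case using basedeg by (simp add: tone_def)
  next
    case (Cons c w)
    have "(word (c # w) :: (bhat,'k) tens) = tmul (gen c) (word w)" by (simp add: gen_word)
    then show ?case using Cons
      by (simp add: D_cons lsub_add[OF K] lsub_mult[OF K])
  qed
  show "deg1 f \<Longrightarrow> deg1 g \<Longrightarrow> finsupp y \<Longrightarrow> D f g y \<in> K"
  proof -
    assume f: "deg1 f" and g: "deg1 g" and y: "finsupp y"
    show ?thesis using y
    proof (induction y rule: finsupp_induct)
      case zero then show ?case by (simp add: D_def lsub_zero[OF K])
    next
      case (add x y) then show ?case using f g by (simp add: D_tadd lsub_add[OF K])
    next
      case (smult c x) then show ?case using f g by (simp add: D_tsmult lsub_smult[OF K])
    next
      case (word u) then show ?case using words f g by blast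
    qed
  qed
qed


lemma Rl_lmult_closed:
  assumes K: "lsub K" and z: "finsupp z" and hz: "\<And>f. deg1 f \<Longrightarrow> Rl f z \<in> K"
    and a: "finsupp a"
  shows "deg1 f \<Longrightarrow> Rl f (tmul a z) \<in> K"
proof -
  have words: "\<And>f. deg1 f \<Longrightarrow> Rl f (tmul (word u) z) \<in> K" for u
  proof (induction u)
    case Nil
    then show ?case using hz z by (simp add: tone_def[symmetric])
  next
    case (Cons c u)
    have eq: "tmul (word (c # u)) z = tmul (gen c) (tmul (word u) z)"
      using z by (simp add: tmul_assoc[symmetric] gen_word)
    show ?case unfolding eq using Cons z
      by (simp add: Rl_cons lsub_add[OF K] lsub_mult[OF K])
  qed
  show "deg1 f \<Longrightarrow> Rl f (tmul a z) \<in> K"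
    using a
  proof (induction a arbitrary: f rule: finsupp_induct)
    case zero then show ?case by (simp add: lsub_zero[OF K])
  next
    case (add x y) then show ?case using z by (simp add: tmul_tadd_left Rl_tadd_right lsub_add[OF K])
  next
    case (smult c x) then show ?case using z by (simp add: tmul_tsmult_left Rl_tsmult_right lsub_smult[OF K])
  next
    case (word u) then show ?case by (rule words)
  qed
qed

lemma finsupp_bhat_rel: "r \<in> bhat_rel \<Longrightarrow> finsupp r"
  by (auto simp: bhat_rel_def deg1_finsupp)

lemma I1_finsupp: "x \<in> ideal_gen bhat_rel \<Longrightarrow> finsupp x"
  by (erule ideal_finsupp) (rule finsupp_bhat_rel)

lemma Rl_rel:
  assumes r: "r \<in> bhat_rel" and f: "deg1 f" and y: "finsupp y"
  shows "Rl f (tmul r y) = tmul r (Rl f y)"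
proof -
  obtain c d \<beta> where rdef: "r = tsub (tsub (tmul (gen c) (gen d)) (tmul (gen d) (gen c))) \<beta>"
    and \<beta>: "deg1 \<beta>" and e\<beta>: "emb \<beta> = br (bhat_emb c) (bhat_emb d)"
    using r unfolding bhat_rel_def by blast
  let ?ec = "bhat_emb c" and ?ed = "bhat_emb d"
  have J: "br (br f ?ec) ?ed = tadd (br (br f ?ed) ?ec) (br f (br ?ec ?ed))"
    by (rule br_jacobi) (simp_all add: f)
  have fb: "finsupp \<beta>" using \<beta> by (simp add: deg1_finsupp)
  have ry: "tmul r y = tsub (tsub (tmul (gen c) (tmul (gen d) y)) (tmul (gen d) (tmul (gen c) y))) (tmul \<beta> y)"
    unfolding rdef using y fb by (simp add: tmul_tsub_left tmul_assoc)
  have ry2: "tmul r (Rl f y) = tsub (tsub (tmul (gen c) (tmul (gen d) (Rl f y))) (tmul (gen d) (tmul (gen c) (Rl f y)))) (tmul \<beta> (Rl f y))"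
    unfolding rdef using y fb f by (simp add: tmul_tsub_left tmul_assoc)
  show ?thesis
    unfolding ry ry2 using f y fb \<beta>
    by (simp add: Rl_tsub_right Rl_cons Rl_mul Rl_tadd_right J e\<beta> Rl_tadd_left tmul_tadd_right)
       (simp add: fun_eq_iff tadd_def tsub_def algebra_simps)
qed

lemma Rl_I1:
  assumes x: "x \<in> ideal_gen bhat_rel"
  shows "\<And>f y. deg1 f \<Longrightarrow> finsupp y \<Longrightarrow> Rl f (tmul x y) \<in> ideal_gen bhat_rel"
  using x
proof (induction x rule: ideal_gen.induct)
  case zero
  then show ?case by (simp add: ideal_gen.zero)
next
  case (base s)
  then show ?case by (simp add: Rl_rel ideal_gen.rmult ideal_gen.base)
next
  case (add x1 x2 f y)
  then have "finsupp x1" "finsupp x2" using I1_finsupp by blast+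
  then show ?case using add by (simp add: tmul_tadd_left Rl_tadd_right ideal_gen.add)
next
  case (smult x c f y)
  then have "finsupp x" using I1_finsupp by blast+
  then show ?case using smult by (simp add: tmul_tsmult_left Rl_tsmult_right ideal_gen.smult)
next
  case (lmult x a f y)
  have xf: "finsupp x" using lmult I1_finsupp by blast
  have a: "finsupp a" "deg1 f" "finsupp y" using lmult by blast+
  have "Rl f (tmul a (tmul x y)) \<in> ideal_gen bhat_rel"
    by (rule Rl_lmult_closed[OF lsub_ideal _ _ a(1) a(2)]) (use lmult xf a in simp_all)
  then show ?case using xf lmult by (simp add: tmul_assoc)
next
  case (rmult x a f y)
  have xf: "finsupp x" using rmult I1_finsupp by blast
  have "Rl f (tmul x (tmul a y)) \<in> ideal_gen bhat_rel"
    using rmult by simp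
  then show ?case using xf rmult by (simp add: tmul_assoc)
qed

lemma Rl_I1': "x \<in> ideal_gen bhat_rel \<Longrightarrow> deg1 f \<Longrightarrow> Rl f x \<in> ideal_gen bhat_rel"
  using Rl_I1[of x f tone] I1_finsupp[of x] by simp


abbreviation "I1 \<equiv> ideal_gen (bhat_rel :: (bhat,'k) tens set)"
abbreviation "K1 \<equiv> quot_ideal hM cM"
abbreviation "I2 \<equiv> ideal_gen (bms_rel :: (bms,'k) tens set)"
abbreviation "K2 \<equiv> verma_ideal hL hM cL cM"

lemma lsub_K1: "lsub K1"
  by (simp add: quot_ideal_def lsub_lideal)

lemma I1_K1: "x \<in> I1 \<Longrightarrow> x \<in> K1"
  by (simp add: quot_ideal_def lideal_gen.base)

lemma K1_gen1: "tsub (gen (Pb 0)) (tsmult (2 * hM) tone) \<in> K1"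
  by (simp add: quot_ideal_def lideal_gen.base)

lemma K1_gen2: "tsub (gen CMb) (tsmult cM tone) \<in> K1"
  by (simp add: quot_ideal_def lideal_gen.base)

lemma tzero_app: "tzero x = 0" by (simp add: tzero_def)

definition hh :: "bms \<Rightarrow> (bhat, 'k) tens" where
  "hh b = (case b of L n \<Rightarrow> (if n < 0 then Oint n else tzero)
     | M n \<Rightarrow> (if n < 0 then Pint n else tzero) | _ \<Rightarrow> tzero)"

definition pp :: "bms \<Rightarrow> (bms, 'k) tens" where
  "pp b = (case b of L n \<Rightarrow> (if n < 0 then gen (L (- n)) else gen (L n))
     | M n \<Rightarrow> (if n < 0 then tsmult (-1) (gen (M (- n))) else gen (M n)) | x \<Rightarrow> gen x)"

definition lam :: "bms \<Rightarrow> 'k" where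
  "lam b = (case b of L n \<Rightarrow> (if n = 0 then hL else 0)
     | M n \<Rightarrow> (if n = 0 then hM else 0) | CL \<Rightarrow> cL | CM \<Rightarrow> cM)"

lemma deg1_hh[simp]: "deg1 (hh b)" by (cases b) (simp_all add: hh_def)
lemma finsupp_hh[simp]: "finsupp (hh b)" by (simp add: deg1_finsupp)
lemma deg1_pp[simp]: "deg1 (pp b)" by (cases b) (simp_all add: pp_def)

lemma pi_decomp: "pi a = tadd (hh a) (tsmult (lam a) tone)"
  by (cases a) (auto simp: pi_def hh_def lam_def)

lemma gen_decomp: "gen a = tadd (emb (hh a)) (pp a)"
  by (cases a) (auto simp: hh_def pp_def emb_Oint emb_Pint fun_eq_iff tadd_def tsub_def tsmult_def tzero_app)

lemma lin1_If: "lin1 g (if P then x else y) = (if P then lin1 g x else lin1 g y)"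
  by simp

lemma lin1_pi_pp: "lin1 pi (pp a) = tsmult (lam a) tone"
  by (cases a) (auto simp: pp_def pi_def lam_def lin1_tsmult)

lemma lin1_pi_pp_pp: "lin1 pi (br (pp a) (pp b)) = tzero"
  apply (cases a; cases b)
  apply (simp_all add: pp_def brl_lin lin1_If)
  apply (simp_all add: bms_br_def lin1_tadd lin1_tsmult lin1_If)
  apply (auto simp: pi_def lin1_tadd lin1_tsmult)
  done


lemma lin1_pi_pp_P0: "lin1 pi (br (pp a) (bhat_emb (Pb 0))) = tzero"
  apply (cases a)
  apply (simp_all add: pp_def bhat_emb_def brl_lin lin1_If)
  apply (simp_all add: bms_br_def lin1_tadd lin1_tsmult lin1_If)
  apply (auto simp: pi_def lin1_tadd lin1_tsmult)
  done

lemma nat_1_plus[simp]: "nat (1 + int j) = Suc j" by simp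

lemma tsub_tzero[simp]: "tsub x tzero = (x::('b,'k) tens)" by (simp add: tsub_def tzero_def)

lemma pi_emb_gen: "tsub (lin1 pi (bhat_emb c)) (gen c) \<in> K1"
proof (cases c)
  case (Ob j)
  have "lin1 pi (bhat_emb c) = gen c"
    using Ob by (simp add: bhat_emb_def lin1_tsub) (auto simp: pi_def Oint_def fun_eq_iff tsub_def tsmult_def tzero_app)
  then show ?thesis by (simp add: lsub_zero[OF lsub_K1])
next
  case (Pb j)
  show ?thesis
  proof (cases "j = 0")
    case True
    have "tsub (lin1 pi (bhat_emb c)) (gen c) = tsmult (-1) (tsub (gen (Pb 0)) (tsmult (2 * hM) tone))"
      using Pb True by (simp add: bhat_emb_def lin1_tadd del: minus_zero) (auto simp: pi_def fun_eq_iff tsub_def tsmult_def tadd_def)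
    then show ?thesis using K1_gen1 lsub_smult[OF lsub_K1] by simp
  next
    case False
    have "lin1 pi (bhat_emb c) = gen c"
      using Pb False by (simp add: bhat_emb_def lin1_tadd) (auto simp: pi_def Pint_def fun_eq_iff tadd_def tzero_app)
    then show ?thesis by (simp add: lsub_zero[OF lsub_K1])
  qed
next
  case CMb
  have "tsub (lin1 pi (bhat_emb c)) (gen c) = tsmult (-1) (tsub (gen CMb) (tsmult cM tone))"
    using CMb by (auto simp: bhat_emb_def pi_def fun_eq_iff tsub_def tsmult_def)
  then show ?thesis using K1_gen2 lsub_smult[OF lsub_K1] by simp
qed

lemma pi_emb: "deg1 \<beta> \<Longrightarrow> tsub (lin1 pi (emb \<beta>)) \<beta> \<in> K1"
proof (induction \<beta> rule: deg1_induct)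
  case zero
  then show ?case by (simp add: lsub_zero[OF lsub_K1])
next
  case (add x y)
  have "tsub (lin1 pi (emb (tadd x y))) (tadd x y) = tadd (tsub (lin1 pi (emb x)) x) (tsub (lin1 pi (emb y)) y)"
    using add by (simp add: emb_lin deg1_finsupp lin1_tadd) (simp add: fun_eq_iff tadd_def tsub_def)
  then show ?case using add lsub_add[OF lsub_K1] by simp
next
  case (smult c x)
  have "tsub (lin1 pi (emb (tsmult c x))) (tsmult c x) = tsmult c (tsub (lin1 pi (emb x)) x)"
    using smult by (simp add: emb_lin deg1_finsupp lin1_tsmult) (simp add: fun_eq_iff tsmult_def tsub_def algebra_simps)
  then show ?case using smult lsub_smult[OF lsub_K1] by simp
next
  case (gen b)
  then show ?case using pi_emb_gen by simp
qed

lemma Rl_tone: "Rl f tone = lin1 pi f"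
  by (simp add: Rl_def)

lemma Rl_pi: "deg1 f \<Longrightarrow> Rl f (pi b) = tadd (tadd (tmul (hh b) (lin1 pi f)) (lin1 pi (br f (emb (hh b)))))
    (tsmult (lam b) (lin1 pi f))"
proof -
  assume f: "deg1 f"
  have "Rl f (hh b) = Rl f (tmul (hh b) tone)" by (simp add: deg1_finsupp)
  also have "\<dots> = tadd (tmul (hh b) (lin1 pi f)) (lin1 pi (br f (emb (hh b))))"
    using f Rl_mul[of f "hh b" tone] by (simp add: Rl_tone)
  finally have 1: "Rl f (hh b) = \<dots>" .
  show ?thesis
    using f by (simp add: pi_decomp Rl_tadd_right deg1_finsupp Rl_tsmult_right 1 Rl_tone)
qed

lemma D_base: "D (gen a) (gen b) tone \<in> K1"
proof -
  let ?ha = "hh a" and ?hb = "hh b" and ?pa = "pp a" and ?pb = "pp b"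
  let ?la = "lam a" and ?lb = "lam b"
  let ?ea = "emb ?ha" and ?eb = "emb ?hb"
  have d: "deg1 ?ea" "deg1 ?eb" "deg1 ?pa" "deg1 ?pb" by simp_all
  have as1: "br ?eb ?ea = tsmult (-1) (br ?ea ?eb)" by (rule br_antisym) simp_all
  have as2: "br ?pb ?ea = tsmult (-1) (br ?ea ?pb)" by (rule br_antisym) simp_all
  have X: "tsub (tsub (br (gen a) ?eb) (br (gen b) ?ea)) (br (gen a) (gen b)) = tsub (br ?ea ?eb) (br ?pa ?pb)"
    apply (subst (1 2 3 4) gen_decomp)
    apply (simp add: brl_tadd_left brl_tadd_right as1 as2)
    apply (simp add: fun_eq_iff tadd_def tsub_def tsmult_def)
    done
  have X2: "lin1 pi (emb (bb ?ha ?hb)) =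
      tsub (tsub (lin1 pi (br (gen a) ?eb)) (lin1 pi (br (gen b) ?ea))) (lin1 pi (br (gen a) (gen b)))"
  proof -
    have "tsub (tsub (lin1 pi (br (gen a) ?eb)) (lin1 pi (br (gen b) ?ea))) (lin1 pi (br (gen a) (gen b)))
        = lin1 pi (tsub (tsub (br (gen a) ?eb) (br (gen b) ?ea)) (br (gen a) (gen b)))"
      by (simp add: lin1_tsub del: brl_gen_gen)
    also have "\<dots> = lin1 pi (br ?ea ?eb)"
      unfolding X by (simp add: lin1_tsub lin1_pi_pp_pp)
    also have "\<dots> = lin1 pi (emb (bb ?ha ?hb))"
      by (simp add: emb_bb)
    finally show ?thesis by simp
  qed
  have e1: "Rl (gen a) (pi b) = tadd (tadd (tmul ?hb (pi a)) (lin1 pi (br (gen a) ?eb))) (tsmult ?lb (pi a))"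
    using Rl_pi[of "gen a" b] by (simp del: Rl_gen brl_gen_gen)
  have e2: "Rl (gen b) (pi a) = tadd (tadd (tmul ?ha (pi b)) (lin1 pi (br (gen b) ?ea))) (tsmult ?la (pi b))"
    using Rl_pi[of "gen b" a] by (simp del: Rl_gen brl_gen_gen)
  have "D (gen a) (gen b) tone = tadd (tsmult (-1) (tsub (tsub (tmul ?ha ?hb) (tmul ?hb ?ha)) (bb ?ha ?hb)))
          (tsub (lin1 pi (emb (bb ?ha ?hb))) (bb ?ha ?hb))"
    unfolding D_def Rl_tone lin1_gen e1 e2 X2
    unfolding pi_decomp
    by (simp add: tmul_tadd_right tmul_tsmult_right deg1_finsupp del: brl_gen_gen)
       (simp add: fun_eq_iff tadd_def tsub_def tsmult_def algebra_simps)
  moreover have "tsub (tsub (tmul ?ha ?hb) (tmul ?hb ?ha)) (bb ?ha ?hb) \<in> K1"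
    by (rule I1_K1, rule bhat_rel_deg1) simp_all
  moreover have "tsub (lin1 pi (emb (bb ?ha ?hb))) (bb ?ha ?hb) \<in> K1"
    by (rule pi_emb) simp
  ultimately show ?thesis using lsub_add[OF lsub_K1] lsub_smult[OF lsub_K1] by simp
qed



lemma bms_br_CM[simp]: "bms_br b CM = tzero"
  by (cases b) (simp_all add: bms_br_def)

lemma bhat_br_CMb[simp]: "bhat_br c CMb = tzero"
  by (cases c) (simp_all add: bhat_br_def)

lemma bb_CMb: "bb x (gen CMb) = tzero"
  by (simp add: br_lin_lin1 lin1_fun_tzero)

lemma br_CM: "br x (gen CM) = tzero"
  by (simp add: br_lin_lin1 lin1_fun_tzero)

lemma Rl_gen_mul: "deg1 f \<Longrightarrow> Rl f (gen c) = tadd (tmul (gen c) (lin1 pi f)) (lin1 pi (br f (bhat_emb c)))"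
  using Rl_cons[of f tone c] by (simp add: Rl_tone)


lemma Rl_g1: "Rl (gen b) (tsub (gen (Pb 0)) (tsmult (2 * hM) tone)) \<in> K1"
proof -
  let ?hb = "hh b" and ?lb = "lam b" and ?g1 = "tsub (gen (Pb 0)) (tsmult (2 * hM) tone)"
  let ?P = "gen (Pb 0) :: (bhat,'k) tens"
  have r: "tsub (tsub (tmul ?hb ?P) (tmul ?P ?hb)) (bb ?hb ?P) \<in> K1"
    by (rule I1_K1, rule bhat_rel_deg1) simp_all
  have p: "tsub (lin1 pi (emb (bb ?hb ?P))) (bb ?hb ?P) \<in> K1"
    by (rule pi_emb) simp
  have brd: "br (gen b) (bhat_emb (Pb 0)) = tadd (emb (bb ?hb ?P)) (br (pp b) (bhat_emb (Pb 0)))"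
    by (subst gen_decomp) (simp add: brl_tadd_left emb_bb)
  have A: "R b ?g1 = tsub (R b ?P) (tsmult (2*hM) (pi b))"
    by (simp add: R_tsub R_tsmult)
  have B: "R b ?P = tadd (tmul ?P (pi b)) (lin1 pi (br (gen b) (bhat_emb (Pb 0))))"
    using Rl_gen_mul[of "gen b" "Pb 0"] by simp
  have C: "lin1 pi (br (gen b) (bhat_emb (Pb 0))) = lin1 pi (emb (bb ?hb ?P))"
    unfolding brd by (simp add: lin1_tadd lin1_pi_pp_P0)
  have E: "R b ?g1 = tadd (tadd (tadd (tsmult (-1) (tsub (tsub (tmul ?hb ?P) (tmul ?P ?hb)) (bb ?hb ?P)))
          (tmul ?hb ?g1)) (tsub (lin1 pi (emb (bb ?hb ?P))) (bb ?hb ?P))) (tsmult ?lb ?g1)"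
    unfolding A B C pi_decomp
    apply (simp only: tmul_tadd_right tmul_tsmult_right tmul_tsub_right tmul_tone_right finsupp_gen deg1_finsupp deg1_hh)
    apply (simp add: fun_eq_iff tadd_def tsub_def tsmult_def algebra_simps)
    done
  have "tmul ?hb ?g1 \<in> K1"
    by (rule lsub_mult[OF lsub_K1 K1_gen1]) simp
  then show ?thesis
    unfolding Rl_gen E
    using r p K1_gen1 lsub_add[OF lsub_K1] lsub_smult[OF lsub_K1] by simp
qed


lemma Rl_g2: "Rl (gen b) (tsub (gen CMb) (tsmult cM tone)) \<in> K1"
proof -
  let ?hb = "hh b" and ?lb = "lam b" and ?g2 = "tsub (gen CMb) (tsmult cM tone)"
  let ?C = "gen CMb :: (bhat,'k) tens"
  have r: "tsub (tsub (tmul ?hb ?C) (tmul ?C ?hb)) (bb ?hb ?C) \<in> K1"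
    by (rule I1_K1, rule bhat_rel_deg1) simp_all
  have A: "R b ?g2 = tsub (R b ?C) (tsmult cM (pi b))"
    by (simp add: R_tsub R_tsmult)
  have B: "R b ?C = tmul ?C (pi b)"
    using Rl_gen_mul[of "gen b" "CMb"] by (simp add: bhat_emb_def)
  have E: "R b ?g2 = tadd (tadd (tsmult (-1) (tsub (tsub (tmul ?hb ?C) (tmul ?C ?hb)) (bb ?hb ?C)))
          (tmul ?hb ?g2)) (tsmult ?lb ?g2)"
    unfolding A B pi_decomp bb_CMb
    apply (simp only: tmul_tadd_right tmul_tsmult_right tmul_tsub_right tmul_tone_right finsupp_gen finsupp_hh)
    apply (simp add: fun_eq_iff tadd_def tsub_def tsmult_def tzero_app algebra_simps)
    done
  have "tmul ?hb ?g2 \<in> K1"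
    by (rule lsub_mult[OF lsub_K1 K1_gen2]) simp
  then show ?thesis
    unfolding Rl_gen E
    using r K1_gen2 lsub_add[OF lsub_K1] lsub_smult[OF lsub_K1] by simp
qed

lemma Rl_gens_deg1:
  assumes g: "\<And>b. Rl (gen b) x \<in> K1" and x: "finsupp x"
  shows "deg1 f \<Longrightarrow> Rl f x \<in> K1"
proof (induction f rule: deg1_induct)
  case zero then show ?case by (simp add: lsub_zero[OF lsub_K1])
next
  case (add f1 f2) then show ?case by (simp add: Rl_tadd_left lsub_add[OF lsub_K1])
next
  case (smult c f) then show ?case by (simp add: Rl_tsmult_left lsub_smult[OF lsub_K1])
next
  case (gen b) then show ?case using g by simp
qed


abbreviation "G1 \<equiv> I1 \<union> {tsub (gen (Pb 0)) (tsmult (2 * hM) tone), tsub (gen CMb) (tsmult cM tone)}"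

lemma K1_def': "K1 = lideal_gen G1"
  by (simp add: quot_ideal_def)

lemma G1_finsupp: "s \<in> G1 \<Longrightarrow> finsupp s"
  using I1_finsupp by auto

lemma K1_finsupp: "x \<in> K1 \<Longrightarrow> finsupp x"
  unfolding K1_def' by (erule lideal_finsupp) (rule G1_finsupp)

lemma Rl_K1: "x \<in> K1 \<Longrightarrow> deg1 f \<Longrightarrow> Rl f x \<in> K1"
proof -
  assume "x \<in> K1"
  then have "x \<in> lideal_gen G1" by (simp add: K1_def')
  then show "deg1 f \<Longrightarrow> Rl f x \<in> K1"
  proof (induction x arbitrary: f rule: lideal_gen.induct)
    case zero then show ?case by (simp add: lsub_zero[OF lsub_K1])
  next
    case (base s f)
    have fs: "finsupp s" using base G1_finsupp by blast
    show ?case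
    proof (cases "s \<in> I1")
      case True then show ?thesis using base by (simp add: Rl_I1' I1_K1)
    next
      case False
      then have "s = tsub (gen (Pb 0)) (tsmult (2 * hM) tone) \<or> s = tsub (gen CMb) (tsmult cM tone)"
        using base by blast
      then show ?thesis
      proof
        assume "s = tsub (gen (Pb 0)) (tsmult (2 * hM) tone)"
        then show ?thesis using Rl_gens_deg1[OF _ fs base(2)] Rl_g1 by simp
      next
        assume "s = tsub (gen CMb) (tsmult cM tone)"
        then show ?thesis using Rl_gens_deg1[OF _ fs base(2)] Rl_g2 by simp
      qed
    qed
  next
    case (add x y f)
    have "finsupp x" "finsupp y" using add(1,2) K1_finsupp K1_def' by auto
    then show ?case using add by (simp add: Rl_tadd_right lsub_add[OF lsub_K1])
  next
    case (smult x c f)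
    have "finsupp x" using smult(1) K1_finsupp K1_def' by auto
    then show ?case using smult by (simp add: Rl_tsmult_right lsub_smult[OF lsub_K1])
  next
    case (lmult x a f)
    have "finsupp x" using lmult(1) K1_finsupp K1_def' by auto
    then show ?case using lmult by (intro Rl_lmult_closed[OF lsub_K1]) simp_all
  qed
qed


section \<open>Action of T(bms)\<close>

primrec Rword :: "bms list \<Rightarrow> (bhat, 'k) tens \<Rightarrow> (bhat, 'k) tens" where
  "Rword [] y = y"
| "Rword (b # w) y = R b (Rword w y)"

lemma finsupp_Rword[simp]: "finsupp y \<Longrightarrow> finsupp (Rword w y)"
  by (induction w) simp_all

lemma Rword_tadd: "finsupp x \<Longrightarrow> finsupp y \<Longrightarrow> Rword w (tadd x y) = tadd (Rword w x) (Rword w y)"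
  by (induction w) (simp_all add: R_tadd)
lemma Rword_tsmult: "finsupp x \<Longrightarrow> Rword w (tsmult c x) = tsmult c (Rword w x)"
  by (induction w) (simp_all add: R_tsmult)
lemma Rword_tzero[simp]: "Rword w tzero = tzero"
  by (induction w) simp_all
lemma Rword_append: "Rword (u @ v) y = Rword u (Rword v y)"
  by (induction u) simp_all

definition Act :: "(bms, 'k) tens \<Rightarrow> (bhat, 'k) tens \<Rightarrow> (bhat, 'k) tens" where
  "Act x y = lin (\<lambda>w. Rword w y) x"

lemma Act_word[simp]: "Act (word w) y = Rword w y"
  by (simp add: Act_def)
lemma finsupp_Act[simp]: "finsupp x \<Longrightarrow> finsupp y \<Longrightarrow> finsupp (Act x y)"
  by (simp add: Act_def)
lemma Act_tadd_left: "finsupp x1 \<Longrightarrow> finsupp x2 \<Longrightarrow> Act (tadd x1 x2) y = tadd (Act x1 y) (Act x2 y)"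
  by (simp add: Act_def lin_tadd)
lemma Act_tsmult_left: "finsupp x \<Longrightarrow> Act (tsmult c x) y = tsmult c (Act x y)"
  by (simp add: Act_def lin_tsmult)
lemma Act_tsub_left: "finsupp x1 \<Longrightarrow> finsupp x2 \<Longrightarrow> Act (tsub x1 x2) y = tsub (Act x1 y) (Act x2 y)"
  by (simp add: Act_def lin_tsub)
lemma Act_tzero_left[simp]: "Act tzero y = tzero"
  by (simp add: Act_def)
lemma Act_tadd_right: "finsupp x \<Longrightarrow> finsupp y1 \<Longrightarrow> finsupp y2 \<Longrightarrow> Act x (tadd y1 y2) = tadd (Act x y1) (Act x y2)"
  by (simp add: Act_def Rword_tadd lin_fun_tadd)
lemma Act_tsmult_right: "finsupp x \<Longrightarrow> finsupp y \<Longrightarrow> Act x (tsmult c y) = tsmult c (Act x y)"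
  by (simp add: Act_def Rword_tsmult lin_fun_tsmult)
lemma Act_tsub_right: "finsupp x \<Longrightarrow> finsupp y1 \<Longrightarrow> finsupp y2 \<Longrightarrow> Act x (tsub y1 y2) = tsub (Act x y1) (Act x y2)"
  by (simp add: tsub_as_add Act_tadd_right Act_tsmult_right)
lemma Act_tone[simp]: "Act tone y = y"
  by (simp add: tone_def)
lemma Act_gen[simp]: "Act (gen b) y = R b y"
  by (simp add: gen_def)

lemma Act_tmul:
  assumes x: "finsupp x" and x': "finsupp x'" and y: "finsupp y"
  shows "Act (tmul x x') y = Act x (Act x' y)"
  using x
proof (induction x rule: finsupp_induct)
  case zero then show ?case by simp
next
  case (add x1 x2) then show ?case using x' y by (simp add: tmul_tadd_left Act_tadd_left)
next
  case (smult c x1) then show ?case using x' y by (simp add: tmul_tsmult_left Act_tsmult_left)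
next
  case (word u)
  show ?case using x'
  proof (induction x' rule: finsupp_induct)
    case zero then show ?case by (simp add: Act_def)
  next
    case (add a b) then show ?case using y by (simp add: tmul_tadd_right Act_tadd_left Act_tadd_right Rword_tadd)
  next
    case (smult c a) then show ?case using y by (simp add: tmul_tsmult_right Act_tsmult_left Act_tsmult_right Rword_tsmult)
  next
    case (word v) then show ?case by (simp add: tmul_word_word Rword_append)
  qed
qed

lemma Act_deg1: "deg1 f \<Longrightarrow> Act f y = Rl f y"
proof (induction f rule: deg1_induct)
  case (add f g) then show ?case by (simp add: Act_tadd_left Rl_tadd_left deg1_finsupp)
next
  case (smult c f) then show ?case by (simp add: Act_tsmult_left Rl_tsmult_left deg1_finsupp)
qed simp_all

lemma Rword_K1: "y \<in> K1 \<Longrightarrow> Rword w y \<in> K1"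
proof (induction w)
  case (Cons b w)
  then show ?case using Rl_K1[of "Rword w y" "gen b"] by simp
qed simp

lemma Act_K1: "finsupp x \<Longrightarrow> y \<in> K1 \<Longrightarrow> Act x y \<in> K1"
proof (induction x rule: finsupp_induct)
  case zero then show ?case by (simp add: lsub_zero[OF lsub_K1])
next
  case (add x1 x2) then show ?case by (simp add: Act_tadd_left lsub_add[OF lsub_K1])
next
  case (smult c x) then show ?case by (simp add: Act_tsmult_left lsub_smult[OF lsub_K1])
next
  case (word u) then show ?case by (simp add: Rword_K1)
qed


lemma finsupp_bms_rel: "r \<in> bms_rel \<Longrightarrow> finsupp r"
  by (auto simp: bms_rel_def deg1_finsupp)

lemma I2_finsupp: "x \<in> I2 \<Longrightarrow> finsupp x"
  by (erule ideal_finsupp) (rule finsupp_bms_rel)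

lemma Act_I2: "x \<in> I2 \<Longrightarrow> finsupp y \<Longrightarrow> Act x y \<in> K1"
proof (induction x arbitrary: y rule: ideal_gen.induct)
  case zero then show ?case by (simp add: lsub_zero[OF lsub_K1])
next
  case (base s y)
  then obtain a b where s: "s = tsub (tsub (tmul (gen a) (gen b)) (tmul (gen b) (gen a))) (bms_br a b)"
    unfolding bms_rel_def by blast
  have "Act s y = D (gen a) (gen b) y"
    unfolding s D_def using base
    by (simp add: Act_tsub_left deg1_finsupp Act_tmul Act_deg1 del: brl_gen_gen Rl_gen)
       (simp add: Act_deg1[symmetric])
  also have "\<dots> \<in> K1"
    by (rule D_all[OF lsub_K1 D_base]) (simp_all add: base)
  finally show ?case .
next
  case (add x1 x2 y)
  then show ?case using I2_finsupp by (simp add: Act_tadd_left lsub_add[OF lsub_K1])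
next
  case (smult x c y)
  then show ?case using I2_finsupp by (simp add: Act_tsmult_left lsub_smult[OF lsub_K1])
next
  case (lmult x a y)
  then show ?case using I2_finsupp by (simp add: Act_tmul Act_K1)
next
  case (rmult x a y)
  then show ?case using I2_finsupp by (simp add: Act_tmul)
qed

abbreviation "G2 \<equiv> I2 \<union> ({gen (L n) | n. n > 0} \<union> {gen (M n) | n. n > 0} \<union>
       {tsub (gen (L 0)) (tsmult hL tone), tsub (gen (M 0)) (tsmult hM tone),
        tsub (gen CL) (tsmult cL tone), tsub (gen CM) (tsmult cM tone)})"

lemma K2_def': "K2 = lideal_gen G2"
  by (simp add: verma_ideal_def)

lemma G2_finsupp: "s \<in> G2 \<Longrightarrow> finsupp s"
  using I2_finsupp by auto

lemma K2_finsupp: "x \<in> K2 \<Longrightarrow> finsupp x"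
  unfolding K2_def' by (erule lideal_finsupp) (rule G2_finsupp)

lemma lsub_K2: "lsub K2"
  by (simp add: verma_ideal_def lsub_lideal)

lemma I2_K2: "x \<in> I2 \<Longrightarrow> x \<in> K2"
  by (simp add: verma_ideal_def lideal_gen.base)

lemma G2_K2: "x \<in> G2 \<Longrightarrow> x \<in> K2"
  by (simp add: K2_def' lideal_gen.base)

lemma Act_K2: "x \<in> K2 \<Longrightarrow> Act x tone \<in> K1"
  unfolding K2_def'
proof (induction x rule: lideal_gen.induct)
  case zero then show ?case by (simp add: lsub_zero[OF lsub_K1])
next
  case (base s)
  show ?case
  proof (cases "s \<in> I2")
    case True then show ?thesis by (simp add: Act_I2)
  next
    case False
    then have "Act s tone = tzero" using base
      by (auto simp: Act_tsub_left Act_tsmult_left pi_def)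
    then show ?thesis by (simp add: lsub_zero[OF lsub_K1])
  qed
next
  case (add x1 x2)
  then show ?case using K2_finsupp K2_def' by (simp add: Act_tadd_left lsub_add[OF lsub_K1])
next
  case (smult x c)
  then show ?case using K2_finsupp K2_def' by (simp add: Act_tsmult_left lsub_smult[OF lsub_K1])
next
  case (lmult x a)
  then show ?case using K2_finsupp K2_def' by (simp add: Act_tmul Act_K1)
qed


lemma Q_word: "\<And>\<beta>. deg1 \<beta> \<Longrightarrow> tsub (Rl (emb \<beta>) (word w)) (tmul \<beta> (word w)) \<in> K1"
proof (induction w)
  case Nil
  then show ?case using pi_emb[of \<beta>] by (simp add: tone_def[symmetric] Rl_tone deg1_finsupp)
next
  case (Cons d w)
  let ?Y = "word w :: (bhat,'k) tens" and ?gd = "gen d :: (bhat,'k) tens"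
  have fb: "finsupp \<beta>" using Cons by (simp add: deg1_finsupp)
  have wd: "word (d # w) = tmul ?gd ?Y" by (simp add: gen_word)
  have brr: "br (emb \<beta>) (bhat_emb d) = emb (bb \<beta> ?gd)"
    using Cons by (simp add: emb_bb)
  have rel: "tmul (tsub (tsub (tmul \<beta> ?gd) (tmul ?gd \<beta>)) (bb \<beta> ?gd)) ?Y \<in> K1"
    by (rule I1_K1, rule ideal_gen.rmult, rule bhat_rel_deg1) (simp_all add: Cons)
  have IH1: "tsub (Rl (emb \<beta>) ?Y) (tmul \<beta> ?Y) \<in> K1" using Cons by simp
  have IH2: "tsub (Rl (emb (bb \<beta> ?gd)) ?Y) (tmul (bb \<beta> ?gd) ?Y) \<in> K1" using Cons by simp
  have E: "tsub (Rl (emb \<beta>) (word (d # w))) (tmul \<beta> (word (d # w))) =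
     tadd (tadd (tmul ?gd (tsub (Rl (emb \<beta>) ?Y) (tmul \<beta> ?Y))) (tsub (Rl (emb (bb \<beta> ?gd)) ?Y) (tmul (bb \<beta> ?gd) ?Y)))
       (tsmult (-1) (tmul (tsub (tsub (tmul \<beta> ?gd) (tmul ?gd \<beta>)) (bb \<beta> ?gd)) ?Y))"
    unfolding wd using Cons fb
    apply (simp add: Rl_cons brr tmul_assoc[symmetric] tmul_tsub_left tmul_tsub_right)
    apply (simp add: tmul_assoc fun_eq_iff tadd_def tsub_def tsmult_def)
    done
  show ?case unfolding E
    using IH1 IH2 rel lsub_add[OF lsub_K1] lsub_smult[OF lsub_K1] lsub_mult[OF lsub_K1] by simp
qed

lemma Q: assumes b: "deg1 \<beta>" shows "finsupp y \<Longrightarrow> tsub (Rl (emb \<beta>) y) (tmul \<beta> y) \<in> K1"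
proof (induction y rule: finsupp_induct)
  case zero then show ?case by (simp add: lsub_zero[OF lsub_K1])
next
  case (add x y)
  have "tsub (Rl (emb \<beta>) (tadd x y)) (tmul \<beta> (tadd x y)) =
    tadd (tsub (Rl (emb \<beta>) x) (tmul \<beta> x)) (tsub (Rl (emb \<beta>) y) (tmul \<beta> y))"
    using add b by (simp add: Rl_tadd_right tmul_tadd_right) (simp add: fun_eq_iff tadd_def tsub_def)
  then show ?case using add lsub_add[OF lsub_K1] by simp
next
  case (smult c x)
  have "tsub (Rl (emb \<beta>) (tsmult c x)) (tmul \<beta> (tsmult c x)) = tsmult c (tsub (Rl (emb \<beta>) x) (tmul \<beta> x))"
    using smult b by (simp add: Rl_tsmult_right tmul_tsmult_right) (simp add: fun_eq_iff tsmult_def tsub_def algebra_simps)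
  then show ?case using smult lsub_smult[OF lsub_K1] by simp
next
  case (word u)
  then show ?case using Q_word b by simp
qed

lemma psi_phi: "finsupp z \<Longrightarrow> tsub (Act (emb z) tone) z \<in> K1"
proof (induction z rule: finsupp_induct)
  case zero then show ?case by (simp add: lsub_zero[OF lsub_K1])
next
  case (add x y)
  have "tsub (Act (emb (tadd x y)) tone) (tadd x y) = tadd (tsub (Act (emb x) tone) x) (tsub (Act (emb y) tone) y)"
    using add by (simp add: emb_lin Act_tadd_left) (simp add: fun_eq_iff tadd_def tsub_def)
  then show ?case using add lsub_add[OF lsub_K1] by simp
next
  case (smult c x)
  have "tsub (Act (emb (tsmult c x)) tone) (tsmult c x) = tsmult c (tsub (Act (emb x) tone) x)"
    using smult by (simp add: emb_lin Act_tsmult_left) (simp add: fun_eq_iff tsmult_def tsub_def algebra_simps)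
  then show ?case using smult lsub_smult[OF lsub_K1] by simp
next
  case (word w)
  show ?case
  proof (induction w)
    case Nil then show ?case by (simp add: tone_def[symmetric] lsub_zero[OF lsub_K1])
  next
    case (Cons c w)
    let ?E = "emb (word w)" and ?Y = "Act (emb (word w)) tone"
    have fY: "finsupp ?Y" by simp
    have "emb (word (c # w)) = tmul (bhat_emb c) ?E"
      by (simp add: gen_word[symmetric] tens_hom_tmul del: tens_hom_word)
    then have A: "Act (emb (word (c # w))) tone = Rl (bhat_emb c) ?Y"
      by (simp add: Act_tmul Act_deg1)
    have 1: "Rl (bhat_emb c) (tsub ?Y (word w)) \<in> K1"
      by (rule Rl_K1[OF Cons.IH]) simp
    have 2: "tsub (Rl (emb (gen c)) (word w)) (tmul (gen c) (word w)) \<in> K1"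
      by (rule Q) simp_all
    have "tsub (Act (emb (word (c # w))) tone) (word (c # w)) =
        tadd (Rl (bhat_emb c) (tsub ?Y (word w))) (tsub (Rl (emb (gen c)) (word w)) (tmul (gen c) (word w)))"
      unfolding A by (simp add: Rl_tsub_right gen_word) (simp add: fun_eq_iff tadd_def tsub_def)
    then show ?case using 1 2 lsub_add[OF lsub_K1] by simp
  qed
qed


lemma emb_I1: "x \<in> I1 \<Longrightarrow> emb x \<in> I2"
proof (induction x rule: ideal_gen.induct)
  case zero then show ?case by (simp add: ideal_gen.zero)
next
  case (base s)
  then obtain c d \<beta> where s: "s = tsub (tsub (tmul (gen c) (gen d)) (tmul (gen d) (gen c))) \<beta>"
    and \<beta>: "deg1 \<beta>" and e\<beta>: "emb \<beta> = br (bhat_emb c) (bhat_emb d)"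
    unfolding bhat_rel_def by blast
  have "emb s = tsub (tsub (tmul (bhat_emb c) (bhat_emb d)) (tmul (bhat_emb d) (bhat_emb c))) (br (bhat_emb c) (bhat_emb d))"
    unfolding s using \<beta> by (simp add: emb_lin tens_hom_tmul deg1_finsupp e\<beta>)
  then show ?case by (simp add: bms_rel_deg1)
next
  case (add x y)
  have "finsupp x" "finsupp y" using add I1_finsupp by blast+
  then show ?case using add by (simp add: emb_lin ideal_gen.add)
next
  case (smult x c)
  have "finsupp x" using smult I1_finsupp by blast+
  then show ?case using smult by (simp add: emb_lin ideal_gen.smult)
next
  case (lmult x a)
  have "finsupp x" using lmult I1_finsupp by blast+
  then show ?case using lmult by (simp add: tens_hom_tmul ideal_gen.lmult)
next
  case (rmult x a)
  have "finsupp x" using rmult I1_finsupp by blast+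
  then show ?case using rmult by (simp add: tens_hom_tmul ideal_gen.rmult)
qed

lemma emb_K1: "x \<in> K1 \<Longrightarrow> emb x \<in> K2"
  unfolding K1_def'
proof (induction x rule: lideal_gen.induct)
  case zero then show ?case by (simp add: lsub_zero[OF lsub_K2])
next
  case (base s)
  show ?case
  proof (cases "s \<in> I1")
    case True then show ?thesis by (simp add: emb_I1 I2_K2)
  next
    case False
    then have "s = tsub (gen (Pb 0)) (tsmult (2 * hM) tone) \<or> s = tsub (gen CMb) (tsmult cM tone)"
      using base by blast
    then show ?thesis
    proof
      assume s: "s = tsub (gen (Pb 0)) (tsmult (2 * hM) tone)"
      have "emb s = tsmult 2 (tsub (gen (M 0)) (tsmult hM tone))"
        unfolding s by (simp add: emb_lin bhat_emb_def) (simp add: fun_eq_iff tsub_def tadd_def tsmult_def)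
      moreover have "tsub (gen (M 0)) (tsmult hM tone) \<in> K2" by (rule G2_K2) simp
      ultimately show ?thesis using lsub_smult[OF lsub_K2] by simp
    next
      assume s: "s = tsub (gen CMb) (tsmult cM tone)"
      have "emb s = tsub (gen CM) (tsmult cM tone)"
        unfolding s by (simp add: emb_lin bhat_emb_def)
      then show ?thesis by (simp add: G2_K2)
    qed
  qed
next
  case (add x y)
  have "finsupp x" "finsupp y" using add K1_finsupp K1_def' by blast+
  then show ?case using add by (simp add: emb_lin lsub_add[OF lsub_K2])
next
  case (smult x c)
  have "finsupp x" using smult K1_finsupp K1_def' by blast+
  then show ?case using smult by (simp add: emb_lin lsub_smult[OF lsub_K2])
next
  case (lmult x a)
  have "finsupp x" using lmult K1_finsupp K1_def' by blast+
  then show ?case using lmult by (simp add: tens_hom_tmul lsub_mult[OF lsub_K2])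
qed

lemma S_base_gen: "tsub (gen b) (emb (pi b)) \<in> K2"
proof (cases b)
  case (L n)
  show ?thesis
  proof (cases "n = 0")
    case True then show ?thesis using L by (simp add: pi_def emb_lin G2_K2)
  next
    case False
    show ?thesis
    proof (cases "n < 0")
      case True
      have "tsub (gen b) (emb (pi b)) = gen (L (- n))"
        using L True by (simp add: pi_def emb_Oint) (simp add: fun_eq_iff tsub_def)
      moreover have "gen (L (- n)) \<in> K2" by (rule G2_K2) (use True in auto)
      ultimately show ?thesis by simp
    next
      case False
      then show ?thesis using L \<open>n \<noteq> 0\<close> by (simp add: pi_def) (rule G2_K2, auto)
    qed
  qed
next
  case (M n)
  show ?thesis
  proof (cases "n = 0")
    case True then show ?thesis using M by (simp add: pi_def emb_lin G2_K2)
  next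
    case False
    show ?thesis
    proof (cases "n < 0")
      case True
      have "tsub (gen b) (emb (pi b)) = tsmult (-1) (gen (M (- n)))"
        using M True by (simp add: pi_def emb_Pint) (simp add: fun_eq_iff tsub_def tadd_def tsmult_def)
      moreover have "gen (M (- n)) \<in> K2" by (rule G2_K2) (use True in auto)
      ultimately show ?thesis using lsub_smult[OF lsub_K2] by simp
    next
      case False
      then show ?thesis using M \<open>n \<noteq> 0\<close> by (simp add: pi_def) (rule G2_K2, auto)
    qed
  qed
next
  case CL then show ?thesis by (simp add: pi_def emb_lin G2_K2)
next
  case CM then show ?thesis by (simp add: pi_def emb_lin G2_K2)
qed

lemma S_base: "deg1 f \<Longrightarrow> tsub f (emb (lin1 pi f)) \<in> K2"
proof (induction f rule: deg1_induct)
  case zero then show ?case by (simp add: lsub_zero[OF lsub_K2])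
next
  case (add x y)
  have "tsub (tadd x y) (emb (lin1 pi (tadd x y))) = tadd (tsub x (emb (lin1 pi x))) (tsub y (emb (lin1 pi y)))"
    using add by (simp add: lin1_tadd emb_lin) (simp add: fun_eq_iff tadd_def tsub_def)
  then show ?case using add lsub_add[OF lsub_K2] by simp
next
  case (smult c x)
  have "tsub (tsmult c x) (emb (lin1 pi (tsmult c x))) = tsmult c (tsub x (emb (lin1 pi x)))"
    using smult by (simp add: lin1_tsmult emb_lin) (simp add: fun_eq_iff tsmult_def tsub_def algebra_simps)
  then show ?case using smult lsub_smult[OF lsub_K2] by simp
next
  case (gen b) then show ?case using S_base_gen by simp
qed


lemma S_word: "\<And>f. deg1 f \<Longrightarrow> tsub (tmul f (emb (word w))) (emb (Rl f (word w))) \<in> K2"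
proof (induction w)
  case Nil
  then show ?case using S_base[of f] by (simp add: tone_def[symmetric] Rl_tone deg1_finsupp)
next
  case (Cons c w)
  let ?Y = "word w :: (bhat,'k) tens" and ?E = "emb (word w)" and ?ec = "bhat_emb c"
  have ff: "finsupp f" using Cons by (simp add: deg1_finsupp)
  have wd: "word (c # w) = tmul (gen c) ?Y" by (simp add: gen_word)
  have ew: "emb (word (c # w)) = tmul ?ec ?E"
    by (simp add: gen_word[symmetric] tens_hom_tmul del: tens_hom_word)
  have rel: "tmul (tsub (tsub (tmul f ?ec) (tmul ?ec f)) (br f ?ec)) ?E \<in> K2"
    by (rule I2_K2, rule ideal_gen.rmult, rule bms_rel_deg1) (simp_all add: Cons)
  have IH1: "tsub (tmul f ?E) (emb (Rl f ?Y)) \<in> K2" using Cons by simp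
  have IH2: "tsub (tmul (br f ?ec) ?E) (emb (Rl (br f ?ec) ?Y)) \<in> K2" using Cons by simp
  have E: "tsub (tmul f (emb (word (c # w)))) (emb (Rl f (word (c # w)))) =
     tadd (tadd rel_dummy (tmul ?ec (tsub (tmul f ?E) (emb (Rl f ?Y))))) (tsub (tmul (br f ?ec) ?E) (emb (Rl (br f ?ec) ?Y)))"
    if "rel_dummy = tmul (tsub (tsub (tmul f ?ec) (tmul ?ec f)) (br f ?ec)) ?E" for rel_dummy
    unfolding that ew
    apply (subst wd)
    using Cons ff
    apply (simp add: Rl_cons emb_lin tens_hom_tmul tmul_assoc[symmetric] tmul_tsub_left tmul_tsub_right
        del: tens_hom_word)
    apply (simp add: tmul_assoc fun_eq_iff tadd_def tsub_def tsmult_def)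
    done
  show ?case unfolding E[OF refl]
    using IH1 IH2 rel lsub_add[OF lsub_K2] lsub_mult[OF lsub_K2] by simp
qed

lemma S_gen: assumes f: "deg1 f" shows "finsupp y \<Longrightarrow> tsub (tmul f (emb y)) (emb (Rl f y)) \<in> K2"
proof (induction y rule: finsupp_induct)
  case zero then show ?case by (simp add: lsub_zero[OF lsub_K2])
next
  case (add x y)
  have "tsub (tmul f (emb (tadd x y))) (emb (Rl f (tadd x y))) =
    tadd (tsub (tmul f (emb x)) (emb (Rl f x))) (tsub (tmul f (emb y)) (emb (Rl f y)))"
    using add f by (simp add: Rl_tadd_right emb_lin tmul_tadd_right) (simp add: fun_eq_iff tadd_def tsub_def)
  then show ?case using add lsub_add[OF lsub_K2] by simp
next
  case (smult c x)
  have "tsub (tmul f (emb (tsmult c x))) (emb (Rl f (tsmult c x))) = tsmult c (tsub (tmul f (emb x)) (emb (Rl f x)))"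
    using smult f by (simp add: Rl_tsmult_right emb_lin tmul_tsmult_right) (simp add: fun_eq_iff tsmult_def tsub_def algebra_simps)
  then show ?case using smult lsub_smult[OF lsub_K2] by simp
next
  case (word u)
  then show ?case using S_word f by simp
qed

lemma surj: "finsupp u \<Longrightarrow> tsub u (emb (Act u tone)) \<in> K2"
proof (induction u rule: finsupp_induct)
  case zero then show ?case by (simp add: lsub_zero[OF lsub_K2])
next
  case (add x y)
  have "tsub (tadd x y) (emb (Act (tadd x y) tone)) = tadd (tsub x (emb (Act x tone))) (tsub y (emb (Act y tone)))"
    using add by (simp add: Act_tadd_left emb_lin) (simp add: fun_eq_iff tadd_def tsub_def)
  then show ?case using add lsub_add[OF lsub_K2] by simp
next
  case (smult c x)
  have "tsub (tsmult c x) (emb (Act (tsmult c x) tone)) = tsmult c (tsub x (emb (Act x tone)))"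
    using smult by (simp add: Act_tsmult_left emb_lin) (simp add: fun_eq_iff tsmult_def tsub_def algebra_simps)
  then show ?case using smult lsub_smult[OF lsub_K2] by simp
next
  case (word w)
  show ?case
  proof (induction w)
    case Nil then show ?case by (simp add: tone_def[symmetric] lsub_zero[OF lsub_K2])
  next
    case (Cons b w)
    let ?Y = "Act (word w) tone"
    have 1: "tmul (gen b) (tsub (word w) (emb ?Y)) \<in> K2"
      by (rule lsub_mult[OF lsub_K2 Cons.IH]) simp
    have 2: "tsub (tmul (gen b) (emb ?Y)) (emb (Rl (gen b) ?Y)) \<in> K2"
      by (rule S_gen) simp_all
    have "tsub (word (b # w)) (emb (Act (word (b # w)) tone)) =
      tadd (tmul (gen b) (tsub (word w) (emb ?Y))) (tsub (tmul (gen b) (emb ?Y)) (emb (Rl (gen b) ?Y)))"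
      by (simp add: gen_word tmul_tsub_right del: tens_hom_word)
         (simp add: fun_eq_iff tadd_def tsub_def)
    then show ?case using 1 2 lsub_add[OF lsub_K2] by (simp del: tens_hom_word)
  qed
qed

lemma main: "bhat_mod_iso K1 K2"
  unfolding bhat_mod_iso_def
proof (intro exI[of _ emb] conjI allI impI)
  fix x :: "(bhat,'k) tens" assume "finsupp x" then show "finsupp (emb x)" by simp
next
  fix x y :: "(bhat,'k) tens" assume "finsupp x" "finsupp y" "tsub x y \<in> K1"
  then show "tsub (emb x) (emb y) \<in> K2" using emb_K1[of "tsub x y"] by (simp add: emb_lin)
next
  fix x y :: "(bhat,'k) tens" assume "finsupp x" "finsupp y"
  then show "tsub (emb (tadd x y)) (tadd (emb x) (emb y)) \<in> K2"
    by (simp add: emb_lin lsub_zero[OF lsub_K2])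
next
  fix c and x :: "(bhat,'k) tens" assume "finsupp x"
  then show "tsub (emb (tsmult c x)) (tsmult c (emb x)) \<in> K2"
    by (simp add: emb_lin lsub_zero[OF lsub_K2])
next
  fix a and x :: "(bhat,'k) tens" assume "finsupp x"
  then show "tsub (emb (tmul (gen a) x)) (tmul (bhat_emb a) (emb x)) \<in> K2"
    by (simp add: tens_hom_tmul lsub_zero[OF lsub_K2])
next
  fix x y :: "(bhat,'k) tens" assume x: "finsupp x" and y: "finsupp y" and e: "tsub (emb x) (emb y) \<in> K2"
  have "Act (tsub (emb x) (emb y)) tone \<in> K1" by (rule Act_K2[OF e])
  then have 1: "Act (emb (tsub x y)) tone \<in> K1" using x y by (simp add: emb_lin)
  have 2: "tsub (Act (emb (tsub x y)) tone) (tsub x y) \<in> K1" by (rule psi_phi) (simp add: x y)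
  have "tsub x y = tsub (Act (emb (tsub x y)) tone) (tsub (Act (emb (tsub x y)) tone) (tsub x y))"
    by (simp add: fun_eq_iff tsub_def)
  then show "tsub x y \<in> K1" using 1 2 lsub_sub[OF lsub_K1] by metis
next
  fix y :: "(bms,'k) tens" assume y: "finsupp y"
  show "\<exists>x. finsupp x \<and> tsub y (emb x) \<in> K2"
    by (rule exI[of _ "Act y tone"]) (simp add: y surj)
qed

end

theorem proposition3p5:
  fixes hL hM cL cM :: "'k::field_char_0"
  shows "bhat_mod_iso (quot_ideal hM cM) (verma_ideal hL hM cL cM)"
  by (rule vctx.main)

end
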